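(* Let $\mathcal{X},\mathcal{Y},\Theta$ be separable Hilbert spaces, $T>0$, $A$ the generator of a contraction semigroup on $\mathcal{X}$, $C\in\mathcal{L}(\mathcal{X},\mathcal{Y})$, $B\in L^2(0,T;\mathcal{L}(\Theta,\mathcal{X}))$, $y\in L^2(0,T;\mathcal{Y})$, $\theta_0\in\Theta$, $\kappa\ge0$, and $U_0\in\mathcal{L}(\Theta)$ self-adjoint with $U_0\ge\delta I$ for some $\delta>0$. Assume the system is exactly observable at time $T$: there is $\gamma_0>0$ with $\int_0^T\|Ce^{At}x\|_{\mathcal{Y}}^2dt\ge\gamma_0^2\|x\|^2_{\mathcal{X}}$ for all $x\in\mathcal{X}$. For $\xi\in\Theta$, $\zeta\in\mathcal{X}$ let $\hat z[\xi,\zeta]$ be the (mild) solution of $$\dot{\hat z}=A\hat z+B\xi+\kappa C^*(y-C\hat z),\qquad \hat z(0)=\zeta,$$ and define $J(\xi,\zeta)=\langle \xi-\theta_0,U_0(\xi-\theta_0)\rangle_\Theta+\int_0^T\|y-C\hat z[\xi,\zeta]\|_{\mathcal{Y}}^2\,d\tau$. Then $J$ is strictly convex on $\Theta\times\mathcal{X}$ (in particular it has a unique minimizer). *)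

theory Defs
  imports "HOL-Analysis.Analysis"
begin

text \<open>Strongly continuous contraction semigroup on a Hilbert space, given by its
  family of bounded operators S t (t \<ge> 0), i.e. S t = e^{At}.\<close>
definition contraction_semigroup :: "(real \<Rightarrow> ('x::real_normed_vector \<Rightarrow>\<^sub>L 'x)) \<Rightarrow> bool" where
  "contraction_semigroup S \<longleftrightarrow>
     S 0 = id_blinfun \<and>
     (\<forall>s\<ge>0. \<forall>t\<ge>0. S (s + t) = S s o\<^sub>L S t) \<and>
     (\<forall>x. continuous_on {0..} (\<lambda>t. S t x)) \<and>
     (\<forall>t\<ge>0. norm (S t) \<le> 1)"

definition is_generator :: "('x::real_normed_vector \<Rightarrow> 'x) \<Rightarrow> 'x set \<Rightarrow> (real \<Rightarrow> ('x \<Rightarrow>\<^sub>L 'x)) \<Rightarrow> bool" where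
  "is_generator A D S \<longleftrightarrow>
     D = {x. \<exists>l. ((\<lambda>h. (1 / h) *\<^sub>R (S h x - x)) \<longlongrightarrow> l) (at_right 0)} \<and>
     (\<forall>x\<in>D. ((\<lambda>h. (1 / h) *\<^sub>R (S h x - x)) \<longlongrightarrow> A x) (at_right 0))"

definition badj :: "('x::real_inner \<Rightarrow>\<^sub>L 'y::real_inner) \<Rightarrow> ('y \<Rightarrow>\<^sub>L 'x)" where
  "badj C = (SOME D :: 'y \<Rightarrow>\<^sub>L 'x. \<forall>x v. inner (blinfun_apply C x) v = inner x (blinfun_apply D v))"

text \<open>Mild solution on [0,T] (extended by 0 outside [0,T]) of
  z' = A z + B xi + kappa C^*(y - C z), z(0) = zeta.\<close>
definition is_mild_sol ::
  "(real \<Rightarrow> ('x::{real_inner,polish_space} \<Rightarrow>\<^sub>L 'x)) \<Rightarrow> (real \<Rightarrow> ('th::real_normed_vector \<Rightarrow>\<^sub>L 'x)) \<Rightarrow>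
   ('x \<Rightarrow>\<^sub>L 'y::{real_inner,polish_space}) \<Rightarrow> real \<Rightarrow> (real \<Rightarrow> 'y) \<Rightarrow> real \<Rightarrow> 'th \<Rightarrow> 'x \<Rightarrow> (real \<Rightarrow> 'x) \<Rightarrow> bool" where
  "is_mild_sol S B C kappa y T xi zeta z \<longleftrightarrow>
     continuous_on {0..T} z \<and>
     (\<forall>t. t \<notin> {0..T} \<longrightarrow> z t = 0) \<and>
     (\<forall>t\<in>{0..T}.
        set_integrable lborel {0..t}
          (\<lambda>s. S (t - s) (B s xi + kappa *\<^sub>R badj C (y s - C (z s)))) \<and>
        z t = S t zeta +
          (\<integral>s\<in>{0..t}. S (t - s) (B s xi + kappa *\<^sub>R badj C (y s - C (z s))) \<partial>lborel))"

definition hatz where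
  "hatz S B C kappa y T xi zeta = (THE z. is_mild_sol S B C kappa y T xi zeta z)"

definition costJ where
  "costJ S B C kappa y T U0 theta0 xi zeta =
     inner (xi - theta0) (U0 (xi - theta0)) +
     (\<integral>\<tau>\<in>{0..T}. (norm (y \<tau> - C (hatz S B C kappa y T xi zeta \<tau>)))\<^sup>2 \<partial>lborel)"

definition strict_convex_on :: "'a::real_vector set \<Rightarrow> ('a \<Rightarrow> real) \<Rightarrow> bool" where
  "strict_convex_on K f \<longleftrightarrow> convex K \<and>
     (\<forall>x\<in>K. \<forall>y\<in>K. x \<noteq> y \<longrightarrow> (\<forall>u::real. 0 < u \<and> u < 1 \<longrightarrow>
        f ((1 - u) *\<^sub>R x + u *\<^sub>R y) < (1 - u) * f x + u * f y))"

end

theory Submission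
  imports Defs
begin


instance prod :: ("{real_normed_vector,complete_space}", "{real_normed_vector,complete_space}") banach ..

lemma E_bl: "bounded_linear (\<lambda>x::'a::real_normed_vector. (x, 0::real))"
  by (intro bounded_linear_Pair bounded_linear_ident bounded_linear_zero)

lemma xint_iff:
  fixes f :: "'a \<Rightarrow> 'x::{real_normed_vector,polish_space}"
  shows "integrable M (\<lambda>s. (f s, 0::real)) \<longleftrightarrow> integrable M f"
proof
  assume "integrable M (\<lambda>s. (f s, 0::real))"
  from integrable_bounded_linear[OF bounded_linear_fst this] show "integrable M f" by simp
next
  assume "integrable M f"
  from integrable_bounded_linear[OF E_bl this] show "integrable M (\<lambda>s. (f s, 0::real))" .
qed

lemma xintegral:
  fixes f :: "'a \<Rightarrow> 'x::{real_normed_vector,polish_space}"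
  shows "integral\<^sup>L M (\<lambda>s. (f s, 0::real)) = (integral\<^sup>L M f, 0)"
  by (rule integral_bounded_linear'[OF E_bl bounded_linear_fst]) auto

lemma xmeas_iff:
  fixes f :: "'a \<Rightarrow> 'x::{real_normed_vector,polish_space}"
  shows "(\<lambda>s. (f s, 0::real)) \<in> borel_measurable M \<longleftrightarrow> f \<in> borel_measurable M"
proof
  assume "(\<lambda>s. (f s, 0::real)) \<in> borel_measurable M"
  from borel_measurable_continuous_on[OF continuous_on_fst[OF continuous_on_id] this]
  show "f \<in> borel_measurable M" by simp
next
  assume "f \<in> borel_measurable M"
  show "(\<lambda>s. (f s, 0::real)) \<in> borel_measurable M"
    by (rule borel_measurable_continuous_on[OF _ \<open>f \<in> borel_measurable M\<close>]) (intro continuous_intros)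
qed

lemma x_integrable_bound:
  fixes f :: "'a \<Rightarrow> 'x::{real_normed_vector,polish_space}" and g :: "'a \<Rightarrow> real"
  assumes "integrable M g" "f \<in> borel_measurable M" "AE x in M. norm (f x) \<le> g x"
  shows "integrable M f"
proof -
  have "integrable M (\<lambda>s. (f s, 0::real))"
  proof (rule Bochner_Integration.integrable_bound[OF assms(1)])
    show "(\<lambda>s. (f s, 0::real)) \<in> borel_measurable M" using assms(2) xmeas_iff by blast
    show "AE x in M. norm (f x, 0::real) \<le> norm (g x)"
      using assms(3) by eventually_elim (auto simp: norm_Pair)
  qed
  then show ?thesis using xint_iff by blast
qed

lemma x_integrable_norm:
  fixes f :: "'a \<Rightarrow> 'x::{real_normed_vector,polish_space}"
  assumes "integrable M f" shows "integrable M (\<lambda>x. norm (f x))"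
proof -
  have "integrable M (\<lambda>s. (f s, 0::real))" using assms xint_iff by blast
  from integrable_norm[OF this] show ?thesis by (simp add: norm_Pair)
qed

lemma x_norm_integral:
  fixes f :: "'a \<Rightarrow> 'x::{real_normed_vector,polish_space}"
  shows "norm (integral\<^sup>L M f) \<le> (\<integral>x. norm (f x) \<partial>M)"
  using integral_norm_bound[of M "\<lambda>s. (f s, 0::real)"] by (simp add: xintegral norm_Pair)

lemma x_dominated:
  fixes f :: "'a \<Rightarrow> 'x::{real_normed_vector,polish_space}" and w :: "'a \<Rightarrow> real"
  assumes "f \<in> borel_measurable M" "\<And>i. s i \<in> borel_measurable M" "integrable M w"
  assumes lim: "AE x in M. (\<lambda>i. s i x) \<longlonglongrightarrow> f x"
  assumes bound: "\<And>i. AE x in M. norm (s i x) \<le> w x"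
  shows "(\<lambda>i. integral\<^sup>L M (s i)) \<longlonglongrightarrow> integral\<^sup>L M f"
proof -
  have "(\<lambda>i. integral\<^sup>L M (\<lambda>x. (s i x, 0::real))) \<longlonglongrightarrow> integral\<^sup>L M (\<lambda>x. (f x, 0::real))"
  proof (rule integral_dominated_convergence[OF _ _ assms(3)])
    show "(\<lambda>x. (f x, 0::real)) \<in> borel_measurable M" using assms(1) xmeas_iff by blast
    show "(\<lambda>x. (s i x, 0::real)) \<in> borel_measurable M" for i using assms(2) xmeas_iff by blast
    show "AE x in M. (\<lambda>i. (s i x, 0::real)) \<longlonglongrightarrow> (f x, 0)"
      using lim by eventually_elim (intro tendsto_intros)
    show "AE x in M. norm (s i x, 0::real) \<le> w x" for i
      using bound[of i] by eventually_elim (simp add: norm_Pair)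
  qed
  then have "(\<lambda>i. fst (integral\<^sup>L M (\<lambda>x. (s i x, 0::real)))) \<longlonglongrightarrow> fst (integral\<^sup>L M (\<lambda>x. (f x, 0::real)))"
    by (intro tendsto_intros)
  then show ?thesis by (simp add: xintegral)
qed

lemma meas_apply_family:
  fixes F :: "'a \<Rightarrow> ('x::{real_normed_vector,polish_space} \<Rightarrow>\<^sub>L 'y::{real_normed_vector,polish_space})"
    and v :: "'a \<Rightarrow> 'x"
  assumes Fm: "\<And>a. (\<lambda>s. F s a) \<in> borel_measurable M"
    and vm: "v \<in> borel_measurable M"
  shows "(\<lambda>s. F s (v s)) \<in> borel_measurable M"
proof -
  obtain G where G: "\<And>i. simple_function M (G i)" "\<And>x. x \<in> space M \<Longrightarrow> (\<lambda>i. G i x) \<longlonglongrightarrow> v x"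
    using borel_measurable_implies_sequence_metric[OF vm, of 0] by blast
  have m: "(\<lambda>s. F s (G i s)) \<in> borel_measurable M" for i
  proof -
    have mb: "G i -` {a} \<inter> space M \<in> sets M" for a using G(1) simple_functionD(2) by blast
    have "(\<lambda>s. (\<Sum>a\<in>G i ` space M. indicator (G i -` {a} \<inter> space M) s *\<^sub>R F s a)) \<in> borel_measurable M"
      using mb Fm by (intro borel_measurable_sum borel_measurable_scaleR borel_measurable_indicator) auto
    moreover have "F s (G i s) = (\<Sum>a\<in>G i ` space M. indicator (G i -` {a} \<inter> space M) s *\<^sub>R F s a)"
      if "s \<in> space M" for s
    proof -
      have fin: "finite (G i ` space M)" using G(1) simple_functionD(1) by blast
      have "(\<Sum>a\<in>G i ` space M. indicator (G i -` {a} \<inter> space M) s *\<^sub>R F s a)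
          = (\<Sum>a\<in>G i ` space M. if a = G i s then F s a else 0)"
        using that by (intro sum.cong) (auto simp: indicator_def)
      also have "\<dots> = F s (G i s)" using fin that by (simp add: sum.delta')
      finally show ?thesis by simp
    qed
    ultimately show ?thesis by (metis (no_types, lifting) measurable_cong)
  qed
  show ?thesis
  proof (rule borel_measurable_LIMSEQ_metric[OF m])
    fix x assume "x \<in> space M"
    show "(\<lambda>i. F x (G i x)) \<longlonglongrightarrow> F x (v x)"
      using G(2)[OF \<open>x \<in> space M\<close>] by (intro tendsto_intros)
  qed
qed




locale sg =
  fixes S :: "real \<Rightarrow> ('x::{real_normed_vector,polish_space} \<Rightarrow>\<^sub>L 'x)" and T :: real
  assumes T_pos: "T > 0"
    and Scont: "\<And>x. continuous_on {0..} (\<lambda>t. S t x)"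
    and Snorm: "\<And>t. 0 \<le> t \<Longrightarrow> norm (S t) \<le> 1"
begin

definition good :: "(real \<Rightarrow> 'x) \<Rightarrow> bool" where
  "good g \<longleftrightarrow> g \<in> borel_measurable lborel \<and> set_integrable lborel {0..T} (\<lambda>s. norm (g s))"

definition conv :: "(real \<Rightarrow> 'x) \<Rightarrow> real \<Rightarrow> 'x" where
  "conv g t = (LINT s:{0..t}|lborel. S (t - s) (g s))"

lemma SS_cont: "continuous_on UNIV (\<lambda>s. S (max 0 (t - s)) a)"
proof -
  have "continuous_on UNIV (\<lambda>s::real. max 0 (t - s))" by (intro continuous_intros)
  moreover have "(\<lambda>s::real. max 0 (t - s)) ` UNIV \<subseteq> {0..}" by auto
  ultimately show ?thesis using continuous_on_compose2[OF Scont[of a]] by blast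
qed

lemma SS_cont': "continuous_on UNIV (\<lambda>t. S (max 0 (t - s)) a)"
proof -
  have "continuous_on UNIV (\<lambda>t::real. max 0 (t - s))" by (intro continuous_intros)
  moreover have "(\<lambda>t::real. max 0 (t - s)) ` UNIV \<subseteq> {0..}" by auto
  ultimately show ?thesis using continuous_on_compose2[OF Scont[of a]] by blast
qed

lemma Sn: "0 \<le> r \<Longrightarrow> norm (S r a) \<le> norm a"
  using norm_blinfun[of "S r" a] Snorm[of r] mult_right_mono[of "norm (S r)" 1 "norm a"]
  by (simp add: order_trans)

lemma conv_meas:
  assumes "g \<in> borel_measurable lborel"
  shows "(\<lambda>s. indicator {0..t} s *\<^sub>R S (t - s) (g s)) \<in> borel_measurable lborel"
proof -
  have "(\<lambda>s. S (max 0 (t - s)) (indicator {0..t} s *\<^sub>R g s)) \<in> borel_measurable lborel"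
  proof (rule meas_apply_family)
    show "(\<lambda>s. S (max 0 (t - s)) a) \<in> borel_measurable lborel" for a
      using borel_measurable_continuous_onI[OF SS_cont] by (simp add: measurable_lborel1)
    show "(\<lambda>s. indicator {0..t} s *\<^sub>R g s) \<in> borel_measurable lborel"
      using assms by measurable
  qed
  moreover have "S (max 0 (t - s)) (indicator {0..t} s *\<^sub>R g s) = indicator {0..t} s *\<^sub>R S (t - s) (g s)" for s
    by (cases "s \<in> {0..t}") (auto simp: blinfun.scaleR_right max_def)
  ultimately show ?thesis by simp
qed

lemma good_norm_int:
  assumes "good g" "t \<le> T"
  shows "set_integrable lborel {0..t} (\<lambda>s. norm (g s))"
proof -
  have "set_integrable lborel {0..t} (\<lambda>s. indicator {0..T} s *\<^sub>R norm (g s))"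
    using assms integrable_mult_indicator[of "{0..t}" lborel "\<lambda>s. indicator {0..T} s *\<^sub>R norm (g s)"]
    unfolding good_def set_integrable_def by auto
  moreover have "(\<lambda>s. indicator {0..t} s *\<^sub>R (indicator {0..T} s *\<^sub>R norm (g s))) = (\<lambda>s. indicator {0..t} s *\<^sub>R norm (g s))"
    using assms(2) by (auto simp: indicator_def)
  ultimately show ?thesis unfolding set_integrable_def by simp
qed

lemma conv_int:
  assumes "good g" "t \<le> T"
  shows "set_integrable lborel {0..t} (\<lambda>s. S (t - s) (g s))"
  unfolding set_integrable_def
proof (rule x_integrable_bound)
  show "integrable lborel (\<lambda>s. indicator {0..t} s *\<^sub>R norm (g s))"
    using good_norm_int[OF assms] unfolding set_integrable_def .
  show "(\<lambda>s. indicator {0..t} s *\<^sub>R S (t - s) (g s)) \<in> borel_measurable lborel"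
    using assms(1) unfolding good_def by (intro conv_meas) auto
  show "AE s in lborel. norm (indicator {0..t} s *\<^sub>R S (t - s) (g s)) \<le> indicator {0..t} s *\<^sub>R norm (g s)"
    by (intro AE_I2) (auto simp: indicator_def Sn)
qed

lemma conv_norm:
  assumes "good g" "t \<le> T"
  shows "norm (conv g t) \<le> (LINT s:{0..t}|lborel. norm (g s))"
proof -
  have "norm (conv g t) \<le> (\<integral>s. norm (indicator {0..t} s *\<^sub>R S (t - s) (g s)) \<partial>lborel)"
    unfolding conv_def set_lebesgue_integral_def by (rule x_norm_integral)
  also have "\<dots> \<le> (\<integral>s. indicator {0..t} s *\<^sub>R norm (g s) \<partial>lborel)"
  proof (rule integral_mono)
    show "integrable lborel (\<lambda>s. norm (indicator {0..t} s *\<^sub>R S (t - s) (g s)))"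
      using conv_int[OF assms] unfolding set_integrable_def by (rule x_integrable_norm)
    show "integrable lborel (\<lambda>s. indicator {0..t} s *\<^sub>R norm (g s))"
      using good_norm_int[OF assms] unfolding set_integrable_def .
  qed (auto simp: indicator_def Sn)
  finally show ?thesis unfolding set_lebesgue_integral_def .
qed

lemma set_int_mono_sub:
  fixes f :: "real \<Rightarrow> real"
  assumes "set_integrable lborel {0..T} f" "\<And>s. 0 \<le> f s" "t \<le> T"
  shows "(LINT s:{0..t}|lborel. f s) \<le> (LINT s:{0..T}|lborel. f s)"
  unfolding set_lebesgue_integral_def
proof (rule integral_mono)
  show "integrable lborel (\<lambda>s. indicator {0..T} s *\<^sub>R f s)" using assms(1) unfolding set_integrable_def .
  have "set_integrable lborel {0..t} f"
    by (rule set_integrable_subset[OF assms(1)]) (use assms in auto)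
  then show "integrable lborel (\<lambda>s. indicator {0..t} s *\<^sub>R f s)" unfolding set_integrable_def .
qed (use assms in \<open>auto simp: indicator_def\<close>)

lemma good_add: "good f \<Longrightarrow> good g \<Longrightarrow> good (\<lambda>s. f s + g s)"
  unfolding good_def
proof (intro conjI)
  assume a: "f \<in> borel_measurable lborel \<and> set_integrable lborel {0..T} (\<lambda>s. norm (f s))"
     "g \<in> borel_measurable lborel \<and> set_integrable lborel {0..T} (\<lambda>s. norm (g s))"
  then show m: "(\<lambda>s. f s + g s) \<in> borel_measurable lborel" by auto
  show "set_integrable lborel {0..T} (\<lambda>s. norm (f s + g s))"
    unfolding set_integrable_def
  proof (rule Bochner_Integration.integrable_bound)
    show "integrable lborel (\<lambda>s. indicator {0..T} s *\<^sub>R norm (f s) + indicator {0..T} s *\<^sub>R norm (g s))"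
      using a unfolding set_integrable_def by auto
    show "(\<lambda>s. indicator {0..T} s *\<^sub>R norm (f s + g s)) \<in> borel_measurable lborel" using m by measurable
    show "AE x in lborel. norm (indicator {0..T} x *\<^sub>R norm (f x + g x))
        \<le> norm (indicator {0..T} x *\<^sub>R norm (f x) + indicator {0..T} x *\<^sub>R norm (g x))"
      by (intro AE_I2) (auto simp: indicator_def norm_triangle_ineq)
  qed
qed

lemma good_scale: "good f \<Longrightarrow> good (\<lambda>s. c *\<^sub>R f s)"
  unfolding good_def set_integrable_def by (auto simp: mult.left_commute[of _ "\<bar>c\<bar>"])

lemma good_blin: "good f \<Longrightarrow> good (\<lambda>s. blinfun_apply P (f s))"
  unfolding good_def
proof (intro conjI)
  assume a: "f \<in> borel_measurable lborel \<and> set_integrable lborel {0..T} (\<lambda>s. norm (f s))"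
  then show m: "(\<lambda>s. P (f s)) \<in> borel_measurable lborel"
    using borel_measurable_continuous_on[OF linear_continuous_on[OF blinfun.bounded_linear_right]] by (auto simp: measurable_lborel1)
  show "set_integrable lborel {0..T} (\<lambda>s. norm (P (f s)))"
    unfolding set_integrable_def
  proof (rule Bochner_Integration.integrable_bound)
    show "integrable lborel (\<lambda>s. norm P * (indicator {0..T} s *\<^sub>R norm (f s)))"
      using a unfolding set_integrable_def by auto
    show "(\<lambda>s. indicator {0..T} s *\<^sub>R norm (P (f s))) \<in> borel_measurable lborel" using m by measurable
    show "AE x in lborel. norm (indicator {0..T} x *\<^sub>R norm (P (f x))) \<le> norm (norm P * (indicator {0..T} x *\<^sub>R norm (f x)))"
      by (intro AE_I2) (auto simp: indicator_def norm_blinfun)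
  qed
qed

lemma good_diff: "good f \<Longrightarrow> good g \<Longrightarrow> good (\<lambda>s. f s - g s)"
  using good_add[of f "\<lambda>s. (-1) *\<^sub>R g s"] good_scale[of g "-1"] by simp

lemma conv_add: "good f \<Longrightarrow> good g \<Longrightarrow> t \<le> T \<Longrightarrow> conv (\<lambda>s. f s + g s) t = conv f t + conv g t"
  unfolding conv_def set_lebesgue_integral_def
  using conv_int[of f t] conv_int[of g t] unfolding set_integrable_def
  by (simp add: blinfun.add_right scaleR_add_right)

lemma conv_scale: "conv (\<lambda>s. c *\<^sub>R f s) t = c *\<^sub>R conv f t"
proof -
  have eq: "(\<lambda>s. indicator {0..t} s *\<^sub>R S (t - s) (c *\<^sub>R f s)) = (\<lambda>s. c *\<^sub>R (indicator {0..t} s *\<^sub>R S (t - s) (f s)))"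
    by (auto simp: blinfun.scaleR_right)
  show ?thesis unfolding conv_def set_lebesgue_integral_def eq by (rule integral_scaleR_right)
qed

lemma conv_diff: "good f \<Longrightarrow> good g \<Longrightarrow> t \<le> T \<Longrightarrow> conv (\<lambda>s. f s - g s) t = conv f t - conv g t"
  using conv_add[of f "\<lambda>s. (-1) *\<^sub>R g s" t] good_scale[of g "-1"] conv_scale[of "-1" g t] by simp

end



lemma exp_int:
  fixes L t :: real assumes "L > 0" "0 \<le> t"
  shows "(LINT s:{0..t}|lborel. exp (2 * L * s)) = (exp (2 * L * t) - 1) / (2 * L)"
proof -
  have "integral\<^sup>L lborel (\<lambda>x. indicator {0 .. t} x *\<^sub>R exp (2 * L * x))
        = exp (2 * L * t) / (2 * L) - exp (2 * L * 0) / (2 * L)"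
  proof (rule integral_FTC_atLeastAtMost[OF assms(2)])
    fix x :: real
    have "((\<lambda>x. exp (2 * L * x) / (2 * L)) has_real_derivative exp (2 * L * x)) (at x)"
      using assms(1) by (auto intro!: derivative_eq_intros)
    then show "((\<lambda>x. exp (2 * L * x) / (2 * L)) has_vector_derivative exp (2 * L * x)) (at x within {0..t})"
      by (simp add: has_real_derivative_iff_has_vector_derivative has_vector_derivative_at_within)
  qed (intro continuous_intros)
  then show ?thesis unfolding set_lebesgue_integral_def by (simp add: diff_divide_distrib)
qed

lemma exp_intble: "set_integrable lborel {0..t} (\<lambda>s::real. c * exp (2 * L * s))"
  by (rule borel_integrable_atLeastAtMost') (intro continuous_intros)

context sg begin

lemma conv_cont:
  assumes g: "good g"
  shows "continuous_on {0..T} (conv g)"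
proof (rule continuous_on_sequentiallyI)
  define h where "h t s = indicator {0..t} s *\<^sub>R S (max 0 (t - s)) (g s)" for t s
  have eqh: "(\<lambda>s. indicator {0..t} s *\<^sub>R S (t - s) (g s)) = h t" for t
    unfolding h_def by (auto simp: indicator_def max_def)
  have hm: "h t \<in> borel_measurable lborel" for t
    using conv_meas[of g t] g unfolding good_def eqh by auto
  have ce: "conv g t = integral\<^sup>L lborel (h t)" for t
    unfolding conv_def set_lebesgue_integral_def eqh ..
  fix u a assume u: "\<forall>n. u n \<in> {0..T}" and a: "a \<in> {0..T}" and ua: "u \<longlonglongrightarrow> a"
  show "(\<lambda>n. conv g (u n)) \<longlonglongrightarrow> conv g a"
    unfolding ce
  proof (rule x_dominated[OF hm hm])
    show "integrable lborel (\<lambda>s. indicator {0..T} s *\<^sub>R norm (g s))"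
      using g unfolding good_def set_integrable_def by auto
    show "AE x in lborel. (\<lambda>i. h (u i) x) \<longlonglongrightarrow> h a x"
      using AE_lborel_singleton[of a]
    proof eventually_elim
      case (elim s)
      have ind: "(\<lambda>n. indicator {0..u n} s :: real) \<longlonglongrightarrow> indicator {0..a} s"
      proof (cases "s < 0")
        case True then show ?thesis by (simp add: indicator_def)
      next
        case False
        show ?thesis
        proof (cases "s < a")
          case True
          then have "eventually (\<lambda>n. s < u n) sequentially" using ua order_tendstoD(1) by blast
          then have "eventually (\<lambda>n. indicator {0..u n} s = (indicator {0..a} s :: real)) sequentially"
            by eventually_elim (use False True in \<open>auto simp: indicator_def\<close>)
          then show ?thesis by (rule tendsto_eventually)
        next
          case False2: False
          then have "a < s" using elim by auto
          then have "eventually (\<lambda>n. u n < s) sequentially" using ua order_tendstoD(2) by blast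
          then have "eventually (\<lambda>n. indicator {0..u n} s = (indicator {0..a} s :: real)) sequentially"
            by eventually_elim (use \<open>a < s\<close> in \<open>auto simp: indicator_def\<close>)
          then show ?thesis by (rule tendsto_eventually)
        qed
      qed
      have "isCont (\<lambda>t. S (max 0 (t - s)) (g s)) a"
        using SS_cont'[of s "g s"] continuous_on_eq_continuous_at[of UNIV] by auto
      then have "(\<lambda>n. S (max 0 (u n - s)) (g s)) \<longlonglongrightarrow> S (max 0 (a - s)) (g s)"
        using isCont_tendsto_compose[OF _ ua] by blast
      then show ?case unfolding h_def using ind by (intro tendsto_scaleR)
    qed
    show "AE x in lborel. norm (h (u i) x) \<le> indicator {0..T} x *\<^sub>R norm (g x)" for i
      using u[rule_format, of i] by (intro AE_I2) (auto simp: h_def indicator_def Sn)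
  qed
qed

lemma conv_bound:
  assumes L: "L > 0" and c: "c \<ge> 0" and g: "good g" and t: "0 \<le> t" "t \<le> T"
    and b: "\<And>s. s \<in> {0..t} \<Longrightarrow> norm (g s) \<le> c * exp (2 * L * s)"
  shows "norm (conv g t) \<le> c * exp (2 * L * t) / (2 * L)"
proof -
  have "norm (conv g t) \<le> (LINT s:{0..t}|lborel. norm (g s))" by (rule conv_norm[OF g t(2)])
  also have "\<dots> \<le> (LINT s:{0..t}|lborel. c * exp (2 * L * s))"
    by (rule set_integral_mono[OF good_norm_int[OF g t(2)] exp_intble b])
  also have "\<dots> = c * ((exp (2 * L * t) - 1) / (2 * L))" using exp_int[OF L t(1)] by simp
  also have "\<dots> \<le> c * exp (2 * L * t) / (2 * L)"
    using L c by (simp add: divide_right_mono mult_left_mono)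
  finally show ?thesis .
qed

end

lemma gronwall:
  fixes w :: "real \<Rightarrow> 'x::real_normed_vector"
  assumes L: "L > 0" and N: "N \<ge> 0" and T: "T \<ge> 0" and w: "continuous_on {0..T} w"
    and H: "\<And>t c. t \<in> {0..T} \<Longrightarrow> c \<ge> 0 \<Longrightarrow> (\<forall>s\<in>{0..t}. norm (w s) \<le> c * exp (2 * L * s))
          \<Longrightarrow> norm (w t) \<le> N + c * exp (2 * L * t) / 2"
    and t: "t \<in> {0..T}"
  shows "norm (w t) \<le> 2 * N * exp (2 * L * T)"
proof -
  define f where "f t = exp (- (2 * L * t)) * norm (w t)" for t
  have "continuous_on {0..T} f" unfolding f_def using w by (intro continuous_intros)
  then obtain t0 where t0: "t0 \<in> {0..T}" and mx: "\<And>s. s \<in> {0..T} \<Longrightarrow> f s \<le> f t0"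
    using continuous_attains_sup[of "{0..T}" f] T by auto
  define m where "m = f t0"
  have m0: "m \<ge> 0" unfolding m_def f_def by simp
  have wb: "norm (w s) \<le> m * exp (2 * L * s)" if "s \<in> {0..T}" for s
  proof -
    have "norm (w s) = exp (2 * L * s) * f s" unfolding f_def by (simp add: exp_minus_inverse mult.assoc[symmetric])
    also have "\<dots> \<le> exp (2 * L * s) * m" using mx[OF that] unfolding m_def by simp
    finally show ?thesis by (simp add: mult.commute)
  qed
  have "norm (w t0) \<le> N + m * exp (2 * L * t0) / 2"
    using H[OF t0 m0] wb t0 by auto
  moreover have "norm (w t0) = exp (2 * L * t0) * m"
    unfolding m_def f_def by (simp add: exp_minus_inverse mult.assoc[symmetric])
  ultimately have "m * exp (2 * L * t0) \<le> 2 * N" by (simp add: mult.commute)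
  moreover have "exp (2 * L * t0) \<ge> 1" using L t0 by auto
  ultimately have "m \<le> 2 * N" using m0 mult_left_mono[of 1 "exp (2 * L * t0)" m] by linarith
  have "norm (w t) \<le> m * exp (2 * L * t)" by (rule wb[OF t])
  also have "\<dots> \<le> 2 * N * exp (2 * L * T)"
    using \<open>m \<le> 2 * N\<close> m0 t L by (intro mult_mono) auto
  finally show ?thesis .
qed




locale msys = sg S T for S :: "real \<Rightarrow> ('x::{real_normed_vector,polish_space} \<Rightarrow>\<^sub>L 'x)" and T +
  fixes P :: "'x \<Rightarrow>\<^sub>L 'x"
begin

definition "LL = norm P + 1"

lemma LL_pos: "LL > 0" unfolding LL_def by (simp add: add_nonneg_pos)

lemma normP: "norm (P x) \<le> LL * norm x"
  unfolding LL_def using norm_blinfun[of P x] by (simp add: distrib_right add_increasing2)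

definition adm :: "(real \<Rightarrow> 'x) \<Rightarrow> bool" where
  "adm z \<longleftrightarrow> continuous_on {0..T} z \<and> (\<forall>t. t \<notin> {0..T} \<longrightarrow> z t = 0)"

definition msol :: "(real \<Rightarrow> 'x) \<Rightarrow> 'x \<Rightarrow> (real \<Rightarrow> 'x) \<Rightarrow> bool" where
  "msol g \<zeta> z \<longleftrightarrow> adm z \<and> (\<forall>t\<in>{0..T}. z t = S t \<zeta> + conv (\<lambda>s. g s - P (z s)) t)"

definition Phi :: "(real \<Rightarrow> 'x) \<Rightarrow> 'x \<Rightarrow> (real \<Rightarrow> 'x) \<Rightarrow> real \<Rightarrow> 'x" where
  "Phi g \<zeta> z t = (if t \<in> {0..T} then S t \<zeta> + conv (\<lambda>s. g s - P (z s)) t else 0)"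

lemma adm_good:
  assumes "adm z" shows "good z"
proof -
  have c: "continuous_on {0..T} z" and z0: "\<And>t. t \<notin> {0..T} \<Longrightarrow> z t = 0" using assms unfolding adm_def by auto
  have "z = (\<lambda>s. indicator {0..T} s *\<^sub>R z s)" using z0 by (auto simp: indicator_def)
  moreover have "(\<lambda>s. indicator {0..T} s *\<^sub>R z s) \<in> borel_measurable borel"
    by (rule borel_measurable_continuous_on_indicator[OF _ c]) auto
  ultimately have "z \<in> borel_measurable lborel" by (simp add: measurable_lborel1)
  moreover have "set_integrable lborel {0..T} (\<lambda>s. norm (z s))"
    by (rule borel_integrable_atLeastAtMost') (intro continuous_intros c)
  ultimately show ?thesis unfolding good_def by simp
qed

lemma adm_bounded:
  assumes "adm z" obtains B where "B \<ge> 0" "\<And>t. norm (z t) \<le> B"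
proof -
  have c: "continuous_on {0..T} z" and z0: "\<And>t. t \<notin> {0..T} \<Longrightarrow> z t = 0" using assms unfolding adm_def by auto
  have "compact (z ` {0..T})" by (rule compact_continuous_image[OF c]) auto
  then obtain B where B: "B > 0" "\<And>x. x \<in> z ` {0..T} \<Longrightarrow> norm x \<le> B"
    using compact_imp_bounded bounded_pos by metis
  have "norm (z t) \<le> B" for t
    using B z0[of t] by (cases "t \<in> {0..T}") auto
  then show ?thesis using that[of B] B(1) by auto
qed

lemma good_gPz: assumes "good g" "adm z" shows "good (\<lambda>s. g s - P (z s))"
  by (rule good_diff[OF assms(1) good_blin[OF adm_good[OF assms(2)]]])

lemma Phi_adm:
  assumes g: "good g" and z: "adm z"
  shows "adm (Phi g \<zeta> z)"
  unfolding adm_def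
proof
  have "continuous_on {0..T} (\<lambda>t. S t \<zeta> + conv (\<lambda>s. g s - P (z s)) t)"
  proof (intro continuous_on_add)
    show "continuous_on {0..T} (\<lambda>t. S t \<zeta>)" by (rule continuous_on_subset[OF Scont]) auto
    show "continuous_on {0..T} (conv (\<lambda>s. g s - P (z s)))" by (rule conv_cont[OF good_gPz[OF g z]])
  qed
  then show "continuous_on {0..T} (Phi g \<zeta> z)"
    by (rule continuous_on_cong[THEN iffD1, rotated 2]) (auto simp: Phi_def)
qed (auto simp: Phi_def)

lemma Phi_contr:
  assumes g: "good g" and z1: "adm z1" and z2: "adm z2" and a: "a \<ge> 0" and t: "t \<in> {0..T}"
    and b: "\<And>s. s \<in> {0..t} \<Longrightarrow> norm (z1 s - z2 s) \<le> a * exp (2 * LL * s)"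
  shows "norm (Phi g \<zeta> z1 t - Phi g \<zeta> z2 t) \<le> a / 2 * exp (2 * LL * t)"
proof -
  have "Phi g \<zeta> z1 t - Phi g \<zeta> z2 t = conv (\<lambda>s. g s - P (z1 s)) t - conv (\<lambda>s. g s - P (z2 s)) t"
    using t by (simp add: Phi_def)
  also have "\<dots> = conv (\<lambda>s. (g s - P (z1 s)) - (g s - P (z2 s))) t"
    using t by (intro conv_diff[symmetric] good_gPz g z1 z2) auto
  also have "(\<lambda>s. (g s - P (z1 s)) - (g s - P (z2 s))) = (\<lambda>s. P (z2 s - z1 s))"
    by (auto simp: blinfun.diff_right)
  finally have eq: "Phi g \<zeta> z1 t - Phi g \<zeta> z2 t = conv (\<lambda>s. P (z2 s - z1 s)) t" .
  have "norm (conv (\<lambda>s. P (z2 s - z1 s)) t) \<le> (LL * a) * exp (2 * LL * t) / (2 * LL)"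
  proof (rule conv_bound[OF LL_pos])
    show "0 \<le> LL * a" using LL_pos a by simp
    show "good (\<lambda>s. P (z2 s - z1 s))" by (intro good_blin good_diff adm_good z1 z2)
    show "0 \<le> t" "t \<le> T" using t by auto
    fix s assume s: "s \<in> {0..t}"
    have "norm (P (z2 s - z1 s)) \<le> LL * norm (z1 s - z2 s)" using normP[of "z2 s - z1 s"] by (simp add: norm_minus_commute)
    also have "\<dots> \<le> LL * (a * exp (2 * LL * s))" using b[OF s] LL_pos by (intro mult_left_mono) auto
    finally show "norm (P (z2 s - z1 s)) \<le> LL * a * exp (2 * LL * s)" by simp
  qed
  also have "\<dots> = a / 2 * exp (2 * LL * t)" using LL_pos by (simp add: field_simps)
  finally show ?thesis using eq by simp
qed

lemma msol_Phi: "msol g \<zeta> z \<Longrightarrow> Phi g \<zeta> z = z"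
  unfolding msol_def adm_def Phi_def by (auto simp: fun_eq_iff)

lemma msol_unique:
  assumes g: "good g" and m1: "msol g \<zeta> z1" and m2: "msol g \<zeta> z2"
  shows "z1 = z2"
proof
  fix t
  have a1: "adm z1" and a2: "adm z2" using m1 m2 unfolding msol_def by auto
  show "z1 t = z2 t"
  proof (cases "t \<in> {0..T}")
    case False then show ?thesis using a1 a2 unfolding adm_def by auto
  next
    case True
    have "norm (z1 t - z2 t) \<le> 2 * 0 * exp (2 * LL * T)"
    proof (rule gronwall[OF LL_pos _ _ _ _ True, where w = "\<lambda>t. z1 t - z2 t"])
      show "continuous_on {0..T} (\<lambda>t. z1 t - z2 t)" using a1 a2 unfolding adm_def by (intro continuous_intros) auto
      fix t c assume t: "t \<in> {0..T}" and c: "0 \<le> c" and b: "\<forall>s\<in>{0..t}. norm (z1 s - z2 s) \<le> c * exp (2 * LL * s)"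
      have "z1 t - z2 t = Phi g \<zeta> z1 t - Phi g \<zeta> z2 t" using msol_Phi[OF m1] msol_Phi[OF m2] by simp
      also have "norm \<dots> \<le> c / 2 * exp (2 * LL * t)" using Phi_contr[OF g a1 a2 c t] b by auto
      finally show "norm (z1 t - z2 t) \<le> 0 + c * exp (2 * LL * t) / 2" by simp
    qed (use T_pos in auto)
    then show ?thesis by simp
  qed
qed

lemma msol_linear:
  assumes g1: "good g1" and g2: "good g2" and m1: "msol g1 \<zeta>1 z1" and m2: "msol g2 \<zeta>2 z2"
  shows "msol (\<lambda>s. a *\<^sub>R g1 s + b *\<^sub>R g2 s) (a *\<^sub>R \<zeta>1 + b *\<^sub>R \<zeta>2) (\<lambda>t. a *\<^sub>R z1 t + b *\<^sub>R z2 t)"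
proof -
  have a1: "adm z1" and a2: "adm z2" using m1 m2 unfolding msol_def by auto
  have "adm (\<lambda>t. a *\<^sub>R z1 t + b *\<^sub>R z2 t)" using a1 a2 unfolding adm_def by (auto intro!: continuous_intros)
  moreover have "a *\<^sub>R z1 t + b *\<^sub>R z2 t = S t (a *\<^sub>R \<zeta>1 + b *\<^sub>R \<zeta>2) +
     conv (\<lambda>s. (a *\<^sub>R g1 s + b *\<^sub>R g2 s) - P (a *\<^sub>R z1 s + b *\<^sub>R z2 s)) t" if t: "t \<in> {0..T}" for t
  proof -
    have f1: "good (\<lambda>s. g1 s - P (z1 s))" and f2: "good (\<lambda>s. g2 s - P (z2 s))"
      using good_gPz g1 g2 a1 a2 by auto
    have eq: "(\<lambda>s. (a *\<^sub>R g1 s + b *\<^sub>R g2 s) - P (a *\<^sub>R z1 s + b *\<^sub>R z2 s))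
       = (\<lambda>s. a *\<^sub>R (g1 s - P (z1 s)) + b *\<^sub>R (g2 s - P (z2 s)))"
      by (auto simp: blinfun.add_right blinfun.scaleR_right algebra_simps)
    have "conv (\<lambda>s. a *\<^sub>R (g1 s - P (z1 s)) + b *\<^sub>R (g2 s - P (z2 s))) t
        = a *\<^sub>R conv (\<lambda>s. g1 s - P (z1 s)) t + b *\<^sub>R conv (\<lambda>s. g2 s - P (z2 s)) t"
      using t by (simp add: conv_add good_scale f1 f2 conv_scale)
    moreover have "z1 t = S t \<zeta>1 + conv (\<lambda>s. g1 s - P (z1 s)) t" "z2 t = S t \<zeta>2 + conv (\<lambda>s. g2 s - P (z2 s)) t"
      using m1 m2 t unfolding msol_def by auto
    ultimately show ?thesis unfolding eq by (simp add: blinfun.add_right blinfun.scaleR_right algebra_simps)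
  qed
  ultimately show ?thesis unfolding msol_def by auto
qed

end



context msys begin

lemma half_pow_lim: "(\<lambda>n. C * (1/2::real)^n) \<longlonglongrightarrow> 0"
  using tendsto_mult[OF tendsto_const[of C] LIMSEQ_realpow_zero[of "1/2::real"]] by simp

lemma le_zero_of_half: 
  fixes x C :: real assumes "\<And>n. x \<le> C * (1/2)^n" shows "x \<le> 0"
  using LIMSEQ_le_const[OF half_pow_lim[of C]] assms by auto

lemma msol_exists:
  assumes g: "good g"
  shows "\<exists>z. msol g \<zeta> z"
proof -
  define zs where "zs n = (Phi g \<zeta> ^^ n) (\<lambda>_. 0)" for n
  have zsS: "zs (Suc n) = Phi g \<zeta> (zs n)" for n unfolding zs_def by simp
  have adm0: "adm (\<lambda>_. 0)" unfolding adm_def by auto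
  have admz: "adm (zs n)" for n
    by (induction n) (auto simp: zs_def adm0 intro: Phi_adm[OF g])
  obtain a0 where a0: "a0 \<ge> 0" "\<And>t. norm (zs 1 t) \<le> a0"
    using adm_bounded[OF admz[of 1]] by blast
  define K where "K = exp (2 * LL * T)"
  have K1: "K \<ge> 1" unfolding K_def using LL_pos T_pos by auto
  have step: "\<forall>t\<in>{0..T}. norm (zs (Suc n) t - zs n t) \<le> (a0 * (1/2)^n) * exp (2 * LL * t)" for n
  proof (induction n)
    case 0
    show ?case
    proof
      fix t :: real assume t: "t \<in> {0..T}"
      have "exp (2 * LL * t) \<ge> 1" using t LL_pos by auto
      then have "a0 \<le> a0 * exp (2 * LL * t)" using a0(1) mult_left_mono[of 1 _ a0] by auto
      then show "norm (zs (Suc 0) t - zs 0 t) \<le> a0 * (1 / 2) ^ 0 * exp (2 * LL * t)"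
        using a0(2)[of t] by (simp add: zs_def)
    qed
  next
    case (Suc n)
    show ?case
    proof
      fix t :: real assume t: "t \<in> {0..T}"
      have "norm (Phi g \<zeta> (zs (Suc n)) t - Phi g \<zeta> (zs n) t) \<le> (a0 * (1/2)^n) / 2 * exp (2 * LL * t)"
        by (rule Phi_contr[OF g admz admz _ t]) (use Suc a0 t in auto)
      then show "norm (zs (Suc (Suc n)) t - zs (Suc n) t) \<le> a0 * (1 / 2) ^ Suc n * exp (2 * LL * t)"
        by (simp add: zsS)
    qed
  qed
  have zs0: "zs n t = 0" if "t \<notin> {0..T}" for n t using admz[of n] that unfolding adm_def by auto
  have step2: "norm (zs (Suc n) t - zs n t) \<le> a0 * K * (1/2)^n" for n t
  proof (cases "t \<in> {0..T}")
    case True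
    have "exp (2 * LL * t) \<le> K" unfolding K_def using True LL_pos by auto
    then have k: "(a0 * (1/2)^n) * exp (2 * LL * t) \<le> (a0 * (1/2)^n) * K" using a0(1) by (intro mult_left_mono) auto
    have s1: "norm (zs (Suc n) t - zs n t) \<le> (a0 * (1/2)^n) * exp (2 * LL * t)" using step[of n] True by blast
    have "norm (zs (Suc n) t - zs n t) \<le> (a0 * (1/2)^n) * K" by (rule order_trans[OF s1 k])
    then show ?thesis by (simp add: mult_ac)
  next
    case False then show ?thesis using zs0 a0 K1 by simp
  qed
  have tele: "norm (zs (n + k) t - zs n t) \<le> 2 * a0 * K * ((1/2)^n - (1/2)^(n+k))" for n k t
  proof (induction k)
    case 0 then show ?case by simp
  next
    case (Suc k)
    have "norm (zs (n + Suc k) t - zs n t) \<le> norm (zs (Suc (n + k)) t - zs (n + k) t) + norm (zs (n + k) t - zs n t)"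
      using norm_triangle_ineq[of "zs (Suc (n + k)) t - zs (n + k) t" "zs (n + k) t - zs n t"] by simp
    also have "\<dots> \<le> a0 * K * (1/2)^(n+k) + 2 * a0 * K * ((1/2)^n - (1/2)^(n+k))"
      using step2 Suc by (intro add_mono) auto
    also have "\<dots> = 2 * a0 * K * ((1/2)^n - (1/2)^(n + Suc k))" by (simp add: algebra_simps)
    finally show ?case .
  qed
  have tele2: "norm (zs m t - zs n t) \<le> 2 * a0 * K * (1/2)^n" if nm: "n \<le> m" for n m t
  proof -
    obtain k where "m = n + k" using le_Suc_ex[OF nm] by auto
    have "2 * a0 * K * ((1/2)^n - (1/2)^(n+k)) \<le> 2 * a0 * K * (1/2)^n"
      using a0(1) K1 by (intro mult_left_mono) auto
    then show ?thesis using tele[of n k t] unfolding \<open>m = n + k\<close> by linarith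
  qed
  have cauchy: "Cauchy (\<lambda>n. zs n t)" for t
  proof (rule metric_CauchyI)
    fix e :: real assume e: "e > 0"
    have "eventually (\<lambda>n. 4 * a0 * K * (1/2)^n < e) sequentially"
      using order_tendstoD(2)[OF half_pow_lim[of "4 * a0 * K"] e] .
    then obtain M where M: "\<And>n. n \<ge> M \<Longrightarrow> 4 * a0 * K * (1/2)^n < e" unfolding eventually_sequentially by blast
    show "\<exists>M. \<forall>m\<ge>M. \<forall>n\<ge>M. dist (zs m t) (zs n t) < e"
    proof (intro exI allI impI)
      fix m n assume "m \<ge> M" "n \<ge> M"
      have "dist (zs m t) (zs n t) \<le> norm (zs m t - zs M t) + norm (zs n t - zs M t)"
        unfolding dist_norm using norm_triangle_ineq4[of "zs m t - zs M t" "zs n t - zs M t"] by simp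
      also have "\<dots> \<le> 2 * a0 * K * (1/2)^M + 2 * a0 * K * (1/2)^M"
        using tele2 \<open>m \<ge> M\<close> \<open>n \<ge> M\<close> by (intro add_mono) auto
      also have "\<dots> < e" using M[of M] by (simp add: mult_ac)
      finally show "dist (zs m t) (zs n t) < e" .
    qed
  qed
  define z where "z t = lim (\<lambda>n. zs n t)" for t
  have lim: "(\<lambda>n. zs n t) \<longlonglongrightarrow> z t" for t
    unfolding z_def using Cauchy_convergent[OF cauchy] convergent_LIMSEQ_iff by blast
  have zb: "norm (z t - zs n t) \<le> 2 * a0 * K * (1/2)^n" for n t
  proof (rule LIMSEQ_le_const2)
    show "(\<lambda>m. norm (zs m t - zs n t)) \<longlonglongrightarrow> norm (z t - zs n t)"
      by (intro tendsto_intros lim)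
    show "\<exists>N. \<forall>m\<ge>N. norm (zs m t - zs n t) \<le> 2 * a0 * K * (1 / 2) ^ n"
      using tele2 by blast
  qed
  have z0: "z t = 0" if "t \<notin> {0..T}" for t
    using LIMSEQ_unique[OF lim[of t]] zs0[OF that] by simp
  have zc: "continuous_on {0..T} z"
  proof (rule uniform_limit_theorem[where F = sequentially and f = zs])
    show "\<forall>\<^sub>F n in sequentially. continuous_on {0..T} (zs n)" using admz unfolding adm_def by auto
    show "uniform_limit {0..T} zs z sequentially"
    proof (rule uniform_limitI)
      fix e :: real assume e: "e > 0"
      have "eventually (\<lambda>n. 2 * a0 * K * (1/2)^n < e) sequentially"
        using order_tendstoD(2)[OF half_pow_lim[of "2 * a0 * K"] e] .
      then show "\<forall>\<^sub>F n in sequentially. \<forall>x\<in>{0..T}. dist (zs n x) (z x) < e"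
        by eventually_elim (use zb in \<open>auto simp: dist_norm norm_minus_commute intro: le_less_trans\<close>)
    qed
  qed simp
  have admz': "adm z" unfolding adm_def using zc z0 by auto
  have fixp: "Phi g \<zeta> z t = z t" if t: "t \<in> {0..T}" for t
  proof -
    have "norm (Phi g \<zeta> z t - z t) \<le> (a0 * K * K + a0 * K) * (1/2)^n" for n
    proof -
      have "norm (Phi g \<zeta> z t - Phi g \<zeta> (zs n) t) \<le> (2 * a0 * K * (1/2)^n) / 2 * exp (2 * LL * t)"
      proof (rule Phi_contr[OF g admz' admz _ t])
        show "0 \<le> 2 * a0 * K * (1 / 2) ^ n" using a0 K1 by simp
        fix s assume "s \<in> {0..t}"
        have "exp (2 * LL * s) \<ge> 1" using \<open>s \<in> {0..t}\<close> LL_pos by auto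
        then show "norm (z s - zs n s) \<le> 2 * a0 * K * (1 / 2) ^ n * exp (2 * LL * s)"
          using zb[of s n] mult_left_mono[of 1 "exp (2 * LL * s)" "2 * a0 * K * (1 / 2) ^ n"] a0 K1 by simp
      qed
      also have "\<dots> \<le> (a0 * K * (1/2)^n) * K"
        using t LL_pos a0 K1 unfolding K_def by (intro mult_mono) auto
      finally have A: "norm (Phi g \<zeta> z t - Phi g \<zeta> (zs n) t) \<le> a0 * K * K * (1/2)^n" by (simp add: algebra_simps)
      have B: "norm (zs (Suc n) t - z t) \<le> a0 * K * (1/2)^n"
        using zb[of t "Suc n"] by (simp add: norm_minus_commute)
      have "norm (Phi g \<zeta> z t - z t) \<le> norm (Phi g \<zeta> z t - Phi g \<zeta> (zs n) t) + norm (zs (Suc n) t - z t)"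
        using norm_triangle_ineq[of "Phi g \<zeta> z t - Phi g \<zeta> (zs n) t" "zs (Suc n) t - z t"] by (simp add: zsS)
      also have "\<dots> \<le> (a0 * K * K + a0 * K) * (1/2)^n" using A B by (simp add: algebra_simps)
      finally show ?thesis .
    qed
    then have "norm (Phi g \<zeta> z t - z t) \<le> 0" by (rule le_zero_of_half)
    then show ?thesis by simp
  qed
  have "msol g \<zeta> z"
    unfolding msol_def using admz' fixp by (auto simp: Phi_def)
  then show ?thesis by blast
qed

lemma msol_ex1: "good g \<Longrightarrow> \<exists>!z. msol g \<zeta> z"
  using msol_exists msol_unique by blast

lemma msol_bound:
  assumes g: "good g" and m: "msol g \<zeta> z" and t: "t \<in> {0..T}"
  shows "norm (z t) \<le> 2 * (norm \<zeta> + (LINT s:{0..T}|lborel. norm (g s))) * exp (2 * LL * T)"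
proof (rule gronwall[OF LL_pos _ _ _ _ t])
  have a: "adm z" using m unfolding msol_def by auto
  show "continuous_on {0..T} z" using a unfolding adm_def by auto
  have I0: "0 \<le> (LINT s:{0..T}|lborel. norm (g s))"
    unfolding set_lebesgue_integral_def by (intro integral_nonneg_AE) (auto simp: indicator_def)
  then show "0 \<le> norm \<zeta> + (LINT s:{0..T}|lborel. norm (g s))" by simp
  show "0 \<le> T" using T_pos by simp
  fix t c assume t: "t \<in> {0..T}" and c: "0 \<le> c" and b: "\<forall>s\<in>{0..t}. norm (z s) \<le> c * exp (2 * LL * s)"
  have pz: "good (\<lambda>s. P (z s))" by (rule good_blin[OF adm_good[OF a]])
  have eq: "z t = S t \<zeta> + (conv g t - conv (\<lambda>s. P (z s)) t)"
    using m t conv_diff[OF g pz, of t] unfolding msol_def by auto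
  have "norm (z t) \<le> norm (S t \<zeta>) + norm (conv g t - conv (\<lambda>s. P (z s)) t)"
    by (subst eq) (rule norm_triangle_ineq)
  then have "norm (z t) \<le> norm (S t \<zeta>) + norm (conv g t) + norm (conv (\<lambda>s. P (z s)) t)"
    using norm_triangle_ineq4[of "conv g t" "conv (\<lambda>s. P (z s)) t"] by linarith
  also have "\<dots> \<le> norm \<zeta> + (LINT s:{0..T}|lborel. norm (g s)) + c * exp (2 * LL * t) / 2"
  proof (intro add_mono)
    show "norm (S t \<zeta>) \<le> norm \<zeta>" using t by (intro Sn) auto
    have "norm (conv g t) \<le> (LINT s:{0..t}|lborel. norm (g s))" using t by (intro conv_norm g) auto
    also have "\<dots> \<le> (LINT s:{0..T}|lborel. norm (g s))"
      using t g unfolding good_def by (intro set_int_mono_sub) auto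
    finally show "norm (conv g t) \<le> (LINT s:{0..T}|lborel. norm (g s))" .
    have "norm (conv (\<lambda>s. P (z s)) t) \<le> (LL * c) * exp (2 * LL * t) / (2 * LL)"
    proof (rule conv_bound[OF LL_pos _ pz])
      show "0 \<le> LL * c" using LL_pos c by simp
      fix s assume s: "s \<in> {0..t}"
      have "norm (P (z s)) \<le> LL * norm (z s)" by (rule normP)
      also have "\<dots> \<le> LL * (c * exp (2 * LL * s))" using b s LL_pos by (intro mult_left_mono) auto
      finally show "norm (P (z s)) \<le> LL * c * exp (2 * LL * s)" by simp
    qed (use t in auto)
    also have "\<dots> = c * exp (2 * LL * t) / 2" using LL_pos by (simp add: field_simps)
    finally show "norm (conv (\<lambda>s. P (z s)) t) \<le> c * exp (2 * LL * t) / 2" .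
  qed
  finally show "norm (z t) \<le> norm \<zeta> + (LINT s:{0..T}|lborel. norm (g s)) + c * exp (2 * LL * t) / 2" .
qed

end



locale prob =
  fixes S :: "real \<Rightarrow> ('x::{real_inner,polish_space} \<Rightarrow>\<^sub>L 'x)" and T :: real
    and C :: "'x \<Rightarrow>\<^sub>L 'y::{real_inner,polish_space}"
    and B :: "real \<Rightarrow> ('th::{real_inner,polish_space} \<Rightarrow>\<^sub>L 'x)"
    and y :: "real \<Rightarrow> 'y" and kappa :: real
  assumes T_pos': "T > 0"
    and Scont': "\<And>x. continuous_on {0..} (\<lambda>t. S t x)"
    and Snorm': "\<And>t. 0 \<le> t \<Longrightarrow> norm (S t) \<le> 1"
    and B_meas: "set_borel_measurable lborel {0..T} B"
    and B_L2: "set_integrable lborel {0..T} (\<lambda>t. (norm (B t))\<^sup>2)"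
    and y_meas: "set_borel_measurable lborel {0..T} y"
    and y_L2: "set_integrable lborel {0..T} (\<lambda>t. (norm (y t))\<^sup>2)"
begin

abbreviation "KC \<equiv> kappa *\<^sub>R (badj C o\<^sub>L C)"

sublocale msys S T KC
  by unfold_locales (use T_pos' Scont' Snorm' in auto)

definition gB :: "'th \<Rightarrow> real \<Rightarrow> 'x" where "gB \<xi> s = indicator {0..T} s *\<^sub>R B s \<xi>"
definition gy :: "real \<Rightarrow> 'x" where "gy s = indicator {0..T} s *\<^sub>R (kappa *\<^sub>R badj C (y s))"

lemma ind_int1: "integrable lborel (indicator {0..T} :: real \<Rightarrow> real)"
proof (intro integrable_real_indicator)
  have "emeasure lborel {0..T} = ennreal T" using T_pos' by simp
  then show "emeasure lborel {0..T} < \<infinity>" by simp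
qed auto

lemma ind_int: "integrable lborel (\<lambda>s::real. indicator {0..T} s * (c::real))"
  by (intro integrable_mult_left) (rule ind_int1)

lemma sq_bound: "(x::real) \<le> 1 + x\<^sup>2"
proof -
  have "0 \<le> (x - 1/2)\<^sup>2" by simp
  moreover have "(x - 1/2)\<^sup>2 = x\<^sup>2 - x + 1/4" by (simp add: power2_eq_square algebra_simps)
  ultimately show ?thesis by linarith
qed

lemma Bm: "(\<lambda>s. indicator {0..T} s *\<^sub>R B s) \<in> borel_measurable lborel"
  using B_meas unfolding set_borel_measurable_def .

lemma ym: "(\<lambda>s. indicator {0..T} s *\<^sub>R y s) \<in> borel_measurable lborel"
  using y_meas unfolding set_borel_measurable_def .

lemma good_gB: "good (gB \<xi>)"
  unfolding good_def
proof
  have "(\<lambda>s. blinfun_apply (indicator {0..T} s *\<^sub>R B s) \<xi>) \<in> borel_measurable lborel"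
    using borel_measurable_continuous_on[OF linear_continuous_on[OF blinfun.bounded_linear_left] Bm] .
  then show m: "gB \<xi> \<in> borel_measurable lborel" unfolding gB_def by (simp add: blinfun.scaleR_left)
  show "set_integrable lborel {0..T} (\<lambda>s. norm (gB \<xi> s))"
    unfolding set_integrable_def
  proof (rule Bochner_Integration.integrable_bound)
    show "integrable lborel (\<lambda>s. norm \<xi> * (indicator {0..T} s * 1 + indicator {0..T} s *\<^sub>R (norm (B s))\<^sup>2))"
      using B_L2 ind_int1 unfolding set_integrable_def by (intro integrable_mult_right integrable_add) auto
    show "(\<lambda>s. indicator {0..T} s *\<^sub>R norm (gB \<xi> s)) \<in> borel_measurable lborel" using m by measurable
    show "AE x in lborel. norm (indicator {0..T} x *\<^sub>R norm (gB \<xi> x))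
       \<le> norm (norm \<xi> * (indicator {0..T} x * 1 + indicator {0..T} x *\<^sub>R (norm (B x))\<^sup>2))"
    proof (intro AE_I2)
      fix x
      have "norm (B x \<xi>) \<le> norm (B x) * norm \<xi>" by (rule norm_blinfun)
      also have "\<dots> \<le> (1 + (norm (B x))\<^sup>2) * norm \<xi>" by (intro mult_right_mono sq_bound) auto
      finally show "norm (indicator {0..T} x *\<^sub>R norm (gB \<xi> x))
       \<le> norm (norm \<xi> * (indicator {0..T} x * 1 + indicator {0..T} x *\<^sub>R (norm (B x))\<^sup>2))"
        by (auto simp: gB_def indicator_def mult.commute)
    qed
  qed
qed

lemma good_gy: "good gy"
  unfolding good_def
proof
  have "(\<lambda>s. kappa *\<^sub>R badj C (indicator {0..T} s *\<^sub>R y s)) \<in> borel_measurable lborel"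
    using borel_measurable_continuous_on[OF linear_continuous_on[OF blinfun.bounded_linear_right] ym]
    by (intro borel_measurable_scaleR) auto
  then show m: "gy \<in> borel_measurable lborel" unfolding gy_def
    by (simp add: blinfun.scaleR_right mult.commute)
  define c where "c = \<bar>kappa\<bar> * norm (badj C)"
  show "set_integrable lborel {0..T} (\<lambda>s. norm (gy s))"
    unfolding set_integrable_def
  proof (rule Bochner_Integration.integrable_bound)
    show "integrable lborel (\<lambda>s. c * (indicator {0..T} s * 1 + indicator {0..T} s *\<^sub>R (norm (y s))\<^sup>2))"
      using y_L2 ind_int1 unfolding set_integrable_def by (intro integrable_mult_right integrable_add) auto
    show "(\<lambda>s. indicator {0..T} s *\<^sub>R norm (gy s)) \<in> borel_measurable lborel" using m by measurable
    show "AE x in lborel. norm (indicator {0..T} x *\<^sub>R norm (gy x))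
       \<le> norm (c * (indicator {0..T} x * 1 + indicator {0..T} x *\<^sub>R (norm (y x))\<^sup>2))"
    proof (intro AE_I2)
      fix x
      have c0: "c \<ge> 0" unfolding c_def by simp
      have "norm (kappa *\<^sub>R badj C (y x)) \<le> c * norm (y x)"
        unfolding c_def using norm_blinfun[of "badj C" "y x"] by (simp add: mult_left_mono mult.assoc)
      also have "\<dots> \<le> c * (1 + (norm (y x))\<^sup>2)" using c0 by (intro mult_left_mono sq_bound) auto
      finally show "norm (indicator {0..T} x *\<^sub>R norm (gy x))
       \<le> norm (c * (indicator {0..T} x * 1 + indicator {0..T} x *\<^sub>R (norm (y x))\<^sup>2))"
        using c0 by (auto simp: gy_def indicator_def)
    qed
  qed
qed

definition "gg \<xi> = (\<lambda>s. gB \<xi> s + gy s)"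

lemma good_gg: "good (gg \<xi>)" unfolding gg_def by (intro good_add good_gB good_gy)

lemma integrand_eq:
  assumes "s \<in> {0..T}"
  shows "gg \<xi> s - KC (z s) = B s \<xi> + kappa *\<^sub>R badj C (y s - C (z s))"
  using assms by (simp add: gg_def gB_def gy_def blinfun.diff_right blinfun.scaleR_left algebra_simps)

lemma mild_iff: "is_mild_sol S B C kappa y T \<xi> \<zeta> z \<longleftrightarrow> msol (gg \<xi>) \<zeta> z"
proof -
  have cong: "(\<lambda>s. S (t - s) (B s \<xi> + kappa *\<^sub>R badj C (y s - C (z s)))) s
     = (\<lambda>s. S (t - s) (gg \<xi> s - KC (z s))) s" if "t \<in> {0..T}" "s \<in> {0..t}" for t s
    using integrand_eq[of s \<xi> z] that by auto
  have I: "set_integrable lborel {0..t} (\<lambda>s. S (t - s) (B s \<xi> + kappa *\<^sub>R badj C (y s - C (z s))))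
       \<longleftrightarrow> set_integrable lborel {0..t} (\<lambda>s. S (t - s) (gg \<xi> s - KC (z s)))" if "t \<in> {0..T}" for t
    by (rule set_integrable_cong) (use cong[OF that] in auto)
  have J: "(LINT s:{0..t}|lborel. S (t - s) (B s \<xi> + kappa *\<^sub>R badj C (y s - C (z s))))
       = conv (\<lambda>s. gg \<xi> s - KC (z s)) t" if "t \<in> {0..T}" for t
    unfolding conv_def by (rule set_lebesgue_integral_cong) (use cong[OF that] in auto)
  show ?thesis
  proof
    assume H: "is_mild_sol S B C kappa y T \<xi> \<zeta> z"
    then show "msol (gg \<xi>) \<zeta> z" unfolding is_mild_sol_def msol_def adm_def using J by auto
  next
    assume H: "msol (gg \<xi>) \<zeta> z"
    then have a: "adm z" unfolding msol_def by auto
    have "set_integrable lborel {0..t} (\<lambda>s. S (t - s) (gg \<xi> s - KC (z s)))" if "t \<in> {0..T}" for t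
      using that by (intro conv_int good_gPz good_gg a) auto
    then show "is_mild_sol S B C kappa y T \<xi> \<zeta> z"
      using H I J unfolding is_mild_sol_def msol_def adm_def by auto
  qed
qed

lemma hatz_msol: "msol (gg \<xi>) \<zeta> (hatz S B C kappa y T \<xi> \<zeta>)"
  unfolding hatz_def mild_iff using theI'[OF msol_ex1[OF good_gg]] .

definition "wsol \<xi> \<zeta> = (THE z. msol (gB \<xi>) \<zeta> z)"
definition "zy = (THE z. msol gy 0 z)"

lemma wsol: "msol (gB \<xi>) \<zeta> (wsol \<xi> \<zeta>)"
  unfolding wsol_def using theI'[OF msol_ex1[OF good_gB]] .

lemma zy: "msol gy 0 zy"
  unfolding zy_def using theI'[OF msol_ex1[OF good_gy]] .

lemma hatz_split: "hatz S B C kappa y T \<xi> \<zeta> = (\<lambda>t. wsol \<xi> \<zeta> t + zy t)"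
proof -
  have "msol (\<lambda>s. 1 *\<^sub>R gB \<xi> s + 1 *\<^sub>R gy s) (1 *\<^sub>R \<zeta> + 1 *\<^sub>R 0) (\<lambda>t. 1 *\<^sub>R wsol \<xi> \<zeta> t + 1 *\<^sub>R zy t)"
    by (rule msol_linear[OF good_gB good_gy wsol zy])
  then have "msol (gg \<xi>) \<zeta> (\<lambda>t. wsol \<xi> \<zeta> t + zy t)" by (simp add: gg_def)
  then show ?thesis using msol_unique[OF good_gg hatz_msol] by blast
qed

lemma gB_lin: "gB (a *\<^sub>R \<xi>1 + b *\<^sub>R \<xi>2) = (\<lambda>s. a *\<^sub>R gB \<xi>1 s + b *\<^sub>R gB \<xi>2 s)"
  by (auto simp: gB_def blinfun.add_right blinfun.scaleR_right algebra_simps)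

lemma wsol_lin: "wsol (a *\<^sub>R \<xi>1 + b *\<^sub>R \<xi>2) (a *\<^sub>R \<zeta>1 + b *\<^sub>R \<zeta>2) = (\<lambda>t. a *\<^sub>R wsol \<xi>1 \<zeta>1 t + b *\<^sub>R wsol \<xi>2 \<zeta>2 t)"
proof -
  have "msol (gB (a *\<^sub>R \<xi>1 + b *\<^sub>R \<xi>2)) (a *\<^sub>R \<zeta>1 + b *\<^sub>R \<zeta>2) (\<lambda>t. a *\<^sub>R wsol \<xi>1 \<zeta>1 t + b *\<^sub>R wsol \<xi>2 \<zeta>2 t)"
    unfolding gB_lin by (rule msol_linear[OF good_gB good_gB wsol wsol])
  then show ?thesis using msol_unique[OF good_gB wsol] by blast
qed

end



lemma qid:
  fixes a b :: "'a::real_inner"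
  shows "(norm ((1 - u) *\<^sub>R a + u *\<^sub>R b))\<^sup>2 = (1 - u) * (norm a)\<^sup>2 + u * (norm b)\<^sup>2 - u * (1 - u) * (norm (a - b))\<^sup>2"
  by (simp add: power2_norm_eq_inner inner_add_left inner_add_right inner_diff_left inner_diff_right
      inner_commute[of b a] algebra_simps)

lemma uid:
  fixes a b :: "'a::real_inner" and U :: "'a \<Rightarrow>\<^sub>L 'a"
  shows "inner ((1 - u) *\<^sub>R a + u *\<^sub>R b) (U ((1 - u) *\<^sub>R a + u *\<^sub>R b))
     = (1 - u) * inner a (U a) + u * inner b (U b) - u * (1 - u) * inner (a - b) (U (a - b))"
  by (simp add: blinfun.add_right blinfun.scaleR_right blinfun.diff_right inner_add_left inner_add_right
      inner_diff_left inner_diff_right algebra_simps)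

lemma sq_tri: fixes a b :: "'a::real_normed_vector" shows "(norm (a - b))\<^sup>2 \<le> 2 * (norm a)\<^sup>2 + 2 * (norm b)\<^sup>2"
proof -
  have "norm (a - b) \<le> norm a + norm b" by (rule norm_triangle_ineq4)
  then have "(norm (a - b))\<^sup>2 \<le> (norm a + norm b)\<^sup>2" by (intro power_mono) auto
  also have "\<dots> \<le> 2 * (norm a)\<^sup>2 + 2 * (norm b)\<^sup>2"
    using zero_le_power2[of "norm a - norm b"] by (simp add: power2_eq_square algebra_simps)
  finally show ?thesis .
qed

lemma norm_prod_sq: "(norm h)\<^sup>2 = (norm (fst h))\<^sup>2 + (norm (snd h))\<^sup>2"
  by (cases h) (simp add: norm_Pair)

context prob begin

definition "W p t = C (wsol (fst p) (snd p) t)"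
definition "rr t = y t - C (zy t)"

lemma W_lin: "W (a *\<^sub>R p + b *\<^sub>R q) t = a *\<^sub>R W p t + b *\<^sub>R W q t"
  unfolding W_def using wsol_lin[of a "fst p" b "fst q" "snd p" "snd q"]
  by (simp add: blinfun.add_right blinfun.scaleR_right)

lemma W_diff: "W (p - q) t = W p t - W q t"
  using W_lin[of 1 p "-1" q t] by simp

lemma W_cont: "continuous_on {0..T} (W p)"
proof -
  have "adm (wsol (fst p) (snd p))" using wsol unfolding msol_def by auto
  then show ?thesis unfolding W_def adm_def by (auto intro: continuous_intros)
qed

lemma W0: "t \<notin> {0..T} \<Longrightarrow> W p t = 0"
proof -
  assume "t \<notin> {0..T}"
  moreover have "adm (wsol (fst p) (snd p))" using wsol unfolding msol_def by auto
  ultimately show ?thesis unfolding W_def adm_def by auto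
qed

lemma intW2: "set_integrable lborel {0..T} (\<lambda>t. (norm (W p t))\<^sup>2)"
  by (rule borel_integrable_atLeastAtMost') (intro continuous_intros W_cont)

lemma intW1: "set_integrable lborel {0..T} (\<lambda>t. norm (W p t))"
  by (rule borel_integrable_atLeastAtMost') (intro continuous_intros W_cont)

lemma zy_cont: "continuous_on {0..T} zy" using zy unfolding msol_def adm_def by auto

lemma intI: "set_integrable lborel {0..T} (\<lambda>t. (norm (rr t - W p t))\<^sup>2)"
proof -
  define V where "V t = C (zy t) + W p t" for t
  have Vc: "continuous_on {0..T} V" unfolding V_def using zy_cont W_cont by (intro continuous_intros) auto
  have eq: "rr t - W p t = y t - V t" for t unfolding rr_def V_def by simp
  have Vm: "(\<lambda>t. indicator {0..T} t *\<^sub>R V t) \<in> borel_measurable lborel"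
    using borel_measurable_continuous_on_indicator[OF _ Vc] by (simp add: measurable_lborel1)
  have "set_integrable lborel {0..T} (\<lambda>t. 2 * (norm (y t))\<^sup>2 + 2 * (norm (V t))\<^sup>2)"
  proof (rule set_integral_add(1))
    show "set_integrable lborel {0..T} (\<lambda>t. 2 * (norm (y t))\<^sup>2)" using y_L2 by simp
    show "set_integrable lborel {0..T} (\<lambda>t. 2 * (norm (V t))\<^sup>2)"
      by (rule borel_integrable_atLeastAtMost') (intro continuous_intros Vc)
  qed
  then have "set_integrable lborel {0..T} (\<lambda>t. (norm (y t - V t))\<^sup>2)"
  proof (rule set_integrable_bound)
    have "(\<lambda>t. (norm (indicator {0..T} t *\<^sub>R y t - indicator {0..T} t *\<^sub>R V t))\<^sup>2) \<in> borel_measurable lborel"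
      using ym Vm by measurable
    moreover have "(\<lambda>t. (norm (indicator {0..T} t *\<^sub>R y t - indicator {0..T} t *\<^sub>R V t))\<^sup>2)
       = (\<lambda>t. indicator {0..T} t *\<^sub>R (norm (y t - V t))\<^sup>2)"
      by (auto simp: indicator_def)
    ultimately show "set_borel_measurable lborel {0..T} (\<lambda>t. (norm (y t - V t))\<^sup>2)"
      unfolding set_borel_measurable_def by simp
    show "AE x in lborel. x \<in> {0..T} \<longrightarrow> norm ((norm (y x - V x))\<^sup>2) \<le> norm (2 * (norm (y x))\<^sup>2 + 2 * (norm (V x))\<^sup>2)"
      using sq_tri by (intro AE_I2) auto
  qed
  then show ?thesis unfolding eq .
qed

end

locale prob2 = prob S T C B y kappa
  for S :: "real \<Rightarrow> ('x::{real_inner,polish_space} \<Rightarrow>\<^sub>L 'x)" and T :: real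
    and C :: "'x \<Rightarrow>\<^sub>L 'y::{real_inner,polish_space}"
    and B :: "real \<Rightarrow> ('th::{real_inner,polish_space} \<Rightarrow>\<^sub>L 'x)"
    and y :: "real \<Rightarrow> 'y" and kappa :: real +
  fixes U0 :: "'th \<Rightarrow>\<^sub>L 'th" and theta0 :: 'th and delta gamma0 :: real
  assumes delta: "delta > 0" and U0_coercive: "\<forall>a. inner a (U0 a) \<ge> delta * (norm a)\<^sup>2"
    and gamma0: "gamma0 > 0"
    and obs: "\<forall>x. (\<integral>t\<in>{0..T}. (norm (C (S t x)))\<^sup>2 \<partial>lborel) \<ge> gamma0\<^sup>2 * (norm x)\<^sup>2"
begin

definition "JJ p = costJ S B C kappa y T U0 theta0 (fst p) (snd p)"
definition "Uf \<xi> = inner (\<xi> - theta0) (U0 (\<xi> - theta0))"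
definition "II p = (LINT t:{0..T}|lborel. (norm (rr t - W p t))\<^sup>2)"
definition "I2 p = (LINT t:{0..T}|lborel. (norm (W p t))\<^sup>2)"
definition "QQ h = inner (fst h) (U0 (fst h)) + I2 h"

lemma JJ_eq: "JJ p = Uf (fst p) + II p"
proof -
  have "y t - C (hatz S B C kappa y T (fst p) (snd p) t) = rr t - W p t" for t
    unfolding hatz_split rr_def W_def by (simp add: blinfun.add_right)
  then show ?thesis unfolding JJ_def costJ_def Uf_def II_def by simp
qed

lemma I2_nonneg: "I2 p \<ge> 0"
  unfolding I2_def set_lebesgue_integral_def by (intro integral_nonneg_AE) (auto simp: indicator_def)

lemma II_nonneg: "II p \<ge> 0"
  unfolding II_def set_lebesgue_integral_def by (intro integral_nonneg_AE) (auto simp: indicator_def)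

lemma U0_nonneg: "inner a (U0 a) \<ge> 0"
  using U0_coercive delta by (smt (verit) mult_nonneg_nonneg zero_le_power2)

lemma JJ_nonneg: "JJ p \<ge> 0"
  unfolding JJ_eq Uf_def using U0_nonneg II_nonneg by (simp add: add_nonneg_nonneg)

lemma JJ_quad: "JJ ((1 - u) *\<^sub>R p + u *\<^sub>R q) = (1 - u) * JJ p + u * JJ q - u * (1 - u) * QQ (p - q)"
proof -
  define m where "m = (1 - u) *\<^sub>R p + u *\<^sub>R q"
  have Um: "Uf (fst m) = (1 - u) * Uf (fst p) + u * Uf (fst q) - u * (1 - u) * inner (fst (p - q)) (U0 (fst (p - q)))"
  proof -
    have "fst m - theta0 = (1 - u) *\<^sub>R (fst p - theta0) + u *\<^sub>R (fst q - theta0)"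
      unfolding m_def by (simp add: algebra_simps)
    moreover have "(fst p - theta0) - (fst q - theta0) = fst (p - q)" by simp
    ultimately show ?thesis unfolding Uf_def using uid[of u "fst p - theta0" "fst q - theta0" U0] by simp
  qed
  have pw: "(norm (rr t - W m t))\<^sup>2 = (1 - u) * (norm (rr t - W p t))\<^sup>2 + u * (norm (rr t - W q t))\<^sup>2
      - u * (1 - u) * (norm (W (p - q) t))\<^sup>2" for t
  proof -
    have "rr t - W m t = (1 - u) *\<^sub>R (rr t - W p t) + u *\<^sub>R (rr t - W q t)"
      unfolding m_def W_lin by (simp add: algebra_simps)
    moreover have "(rr t - W p t) - (rr t - W q t) = - W (p - q) t" unfolding W_diff by simp
    ultimately show ?thesis using qid[of u "rr t - W p t" "rr t - W q t"] by simp
  qed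
  have IIm: "II m = (1 - u) * II p + u * II q - u * (1 - u) * I2 (p - q)"
  proof -
    have "II m = (LINT t:{0..T}|lborel. ((1 - u) * (norm (rr t - W p t))\<^sup>2 + u * (norm (rr t - W q t))\<^sup>2)
      - u * (1 - u) * (norm (W (p - q) t))\<^sup>2)"
      unfolding II_def pw ..
    also have "\<dots> = (LINT t:{0..T}|lborel. (1 - u) * (norm (rr t - W p t))\<^sup>2 + u * (norm (rr t - W q t))\<^sup>2)
      - (LINT t:{0..T}|lborel. u * (1 - u) * (norm (W (p - q) t))\<^sup>2)"
      using intI intW2 by (intro set_integral_diff(2) set_integral_add(1) set_integrable_mult_right) auto
    also have "(LINT t:{0..T}|lborel. (1 - u) * (norm (rr t - W p t))\<^sup>2 + u * (norm (rr t - W q t))\<^sup>2)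
       = (LINT t:{0..T}|lborel. (1 - u) * (norm (rr t - W p t))\<^sup>2) + (LINT t:{0..T}|lborel. u * (norm (rr t - W q t))\<^sup>2)"
      using intI by (intro set_integral_add(2) set_integrable_mult_right) auto
    finally show ?thesis unfolding II_def I2_def by simp
  qed
  show ?thesis unfolding m_def[symmetric] JJ_eq QQ_def Um IIm by (simp add: algebra_simps)
qed

end



lemma sq_add2: fixes a b :: real shows "(a + b)\<^sup>2 \<le> 2 * a\<^sup>2 + 2 * b\<^sup>2"
  using zero_le_power2[of "a - b"] by (simp add: power2_eq_square algebra_simps)

lemma cs_int:
  fixes f :: "real \<Rightarrow> real" and T :: real
  assumes T: "T > 0" and f1: "set_integrable lborel {0..T} f" and f2: "set_integrable lborel {0..T} (\<lambda>t. (f t)\<^sup>2)"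
  shows "(LINT t:{0..T}|lborel. f t)\<^sup>2 \<le> T * (LINT t:{0..T}|lborel. (f t)\<^sup>2)"
proof -
  define I1 where "I1 = (LINT t:{0..T}|lborel. f t)"
  define I2 where "I2 = (LINT t:{0..T}|lborel. (f t)\<^sup>2)"
  define a where "a = I1 / T"
  have c1: "set_integrable lborel {0..T} (\<lambda>t. c :: real)" for c
  proof -
    have "integrable lborel (\<lambda>t. indicator {0..T} t * c :: real)"
    proof (intro integrable_mult_left integrable_real_indicator)
      have "emeasure lborel {0..T} = ennreal T" using T by simp
      then show "emeasure lborel {0..T} < \<infinity>" by simp
    qed auto
    then show ?thesis unfolding set_integrable_def by simp
  qed
  have mT: "measure lborel {0..T} = T" using T by simp
  have "0 \<le> (LINT t:{0..T}|lborel. (f t - a)\<^sup>2)"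
    unfolding set_lebesgue_integral_def by (intro integral_nonneg_AE) (auto simp: indicator_def)
  also have "(\<lambda>t. (f t - a)\<^sup>2) = (\<lambda>t. ((f t)\<^sup>2 - (2 * a) * f t) + a\<^sup>2)"
    by (auto simp: power2_eq_square algebra_simps)
  also have "(LINT t:{0..T}|lborel. ((f t)\<^sup>2 - (2 * a) * f t) + a\<^sup>2)
      = (LINT t:{0..T}|lborel. (f t)\<^sup>2 - (2 * a) * f t) + (LINT t:{0..T}|lborel. a\<^sup>2)"
    using f1 f2 c1 by (intro set_integral_add(2) set_integral_diff(1) set_integrable_mult_right) auto
  also have "(LINT t:{0..T}|lborel. (f t)\<^sup>2 - (2 * a) * f t) = I2 - 2 * a * I1"
    unfolding I1_def I2_def using f1 f2 by (subst set_integral_diff(2)) auto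
  also have "(LINT t:{0..T}|lborel. a\<^sup>2) = T * a\<^sup>2"
    using set_integral_const[of "{0..T}" lborel "a\<^sup>2"] mT T by simp
  finally have "0 \<le> I2 - 2 * a * I1 + T * a\<^sup>2" .
  moreover have "2 * a * I1 - T * a\<^sup>2 = I1\<^sup>2 / T" unfolding a_def using T by (simp add: power2_eq_square field_simps)
  ultimately have "I1\<^sup>2 / T \<le> I2" by linarith
  then show ?thesis unfolding I1_def[symmetric] I2_def[symmetric] using T by (simp add: field_simps)
qed

context prob2 begin

definition "bB = (LINT s:{0..T}|lborel. 1 + (norm (B s))\<^sup>2)"
definition "KK = exp (2 * LL * T)"
definition "rho = \<bar>kappa\<bar> * norm (badj C)"

lemma const_int: "set_integrable lborel {0..T} (\<lambda>t. c :: real)"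
  using ind_int[of c] unfolding set_integrable_def by simp

lemma intBB: "set_integrable lborel {0..T} (\<lambda>s. 1 + (norm (B s))\<^sup>2)"
  using const_int[of 1] B_L2 by (rule set_integral_add(1))

lemma bB_nonneg: "bB \<ge> 0"
  unfolding bB_def set_lebesgue_integral_def by (intro integral_nonneg_AE) (auto simp: indicator_def)

lemma KK1: "KK \<ge> 1" unfolding KK_def using LL_pos T_pos' by auto

lemma gB_int: "(LINT s:{0..T}|lborel. norm (gB \<xi> s)) \<le> bB * norm \<xi>"
proof -
  have "(LINT s:{0..T}|lborel. norm (gB \<xi> s)) \<le> (LINT s:{0..T}|lborel. (1 + (norm (B s))\<^sup>2) * norm \<xi>)"
  proof (rule set_integral_mono)
    show "set_integrable lborel {0..T} (\<lambda>s. norm (gB \<xi> s))" using good_gB unfolding good_def by auto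
    show "set_integrable lborel {0..T} (\<lambda>s. (1 + (norm (B s))\<^sup>2) * norm \<xi>)"
      using intBB by (rule set_integrable_mult_left)
    fix s :: real assume "s \<in> {0..T}"
    have "norm (B s \<xi>) \<le> norm (B s) * norm \<xi>" by (rule norm_blinfun)
    also have "\<dots> \<le> (1 + (norm (B s))\<^sup>2) * norm \<xi>" by (intro mult_right_mono sq_bound) auto
    finally show "norm (gB \<xi> s) \<le> (1 + (norm (B s))\<^sup>2) * norm \<xi>" using \<open>s \<in> {0..T}\<close> by (simp add: gB_def)
  qed
  also have "\<dots> = bB * norm \<xi>" unfolding bB_def by simp
  finally show ?thesis .
qed

lemma W_bound: "t \<in> {0..T} \<Longrightarrow> (norm (W h t))\<^sup>2 \<le> 8 * (norm C)\<^sup>2 * KK\<^sup>2 * (1 + bB\<^sup>2) * (norm h)\<^sup>2"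
proof -
  assume t: "t \<in> {0..T}"
  define \<xi> where "\<xi> = fst h"
  define \<zeta> where "\<zeta> = snd h"
  have "norm (wsol \<xi> \<zeta> t) \<le> 2 * (norm \<zeta> + (LINT s:{0..T}|lborel. norm (gB \<xi> s))) * KK"
    unfolding KK_def by (rule msol_bound[OF good_gB wsol t])
  also have "\<dots> \<le> 2 * (norm \<zeta> + bB * norm \<xi>) * KK"
    using gB_int[of \<xi>] KK1 by (intro mult_right_mono) auto
  finally have w1: "norm (wsol \<xi> \<zeta> t) \<le> 2 * (norm \<zeta> + bB * norm \<xi>) * KK" .
  have "norm (W h t) \<le> norm C * norm (wsol \<xi> \<zeta> t)" unfolding W_def \<xi>_def \<zeta>_def by (rule norm_blinfun)
  also have "\<dots> \<le> norm C * (2 * (norm \<zeta> + bB * norm \<xi>) * KK)" using w1 by (intro mult_left_mono) auto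
  finally have w2: "norm (W h t) \<le> norm C * (2 * (norm \<zeta> + bB * norm \<xi>) * KK)" .
  have "(norm (W h t))\<^sup>2 \<le> (norm C * (2 * (norm \<zeta> + bB * norm \<xi>) * KK))\<^sup>2"
    using w2 by (intro power_mono) auto
  also have "\<dots> = 4 * (norm C)\<^sup>2 * KK\<^sup>2 * (norm \<zeta> + bB * norm \<xi>)\<^sup>2" by (simp add: power2_eq_square algebra_simps)
  also have "\<dots> \<le> 4 * (norm C)\<^sup>2 * KK\<^sup>2 * (2 * (1 + bB\<^sup>2) * (norm h)\<^sup>2)"
  proof (intro mult_left_mono)
    have "(norm \<zeta> + bB * norm \<xi>)\<^sup>2 \<le> 2 * (norm \<zeta>)\<^sup>2 + 2 * (bB * norm \<xi>)\<^sup>2" by (rule sq_add2)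
    also have "\<dots> \<le> 2 * (1 + bB\<^sup>2) * ((norm \<xi>)\<^sup>2 + (norm \<zeta>)\<^sup>2)"
      by (simp add: power2_eq_square algebra_simps add_increasing)
    finally show "(norm \<zeta> + bB * norm \<xi>)\<^sup>2 \<le> 2 * (1 + bB\<^sup>2) * (norm h)\<^sup>2"
      unfolding norm_prod_sq[of h] \<xi>_def \<zeta>_def .
  qed auto
  finally show ?thesis by (simp add: algebra_simps)
qed

definition "MM = T * (8 * (norm C)\<^sup>2 * KK\<^sup>2 * (1 + bB\<^sup>2))"

lemma MM_nonneg: "MM \<ge> 0" unfolding MM_def using T_pos' by simp

lemma I2_upper: "I2 h \<le> MM * (norm h)\<^sup>2"
proof -
  have "I2 h \<le> (LINT t:{0..T}|lborel. 8 * (norm C)\<^sup>2 * KK\<^sup>2 * (1 + bB\<^sup>2) * (norm h)\<^sup>2)"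
    unfolding I2_def by (rule set_integral_mono[OF intW2 const_int W_bound])
  also have "\<dots> = MM * (norm h)\<^sup>2"
    by (subst set_integral_const) (use T_pos' in \<open>auto simp: MM_def\<close>)
  finally show ?thesis .
qed

lemma obs_step:
  "gamma0\<^sup>2 * (norm (snd h))\<^sup>2 \<le> (2 + 4 * T\<^sup>2 * (norm C)\<^sup>2 * rho\<^sup>2) * I2 h + 4 * T * (norm C)\<^sup>2 * bB\<^sup>2 * (norm (fst h))\<^sup>2"
proof -
  define \<xi> where "\<xi> = fst h"
  define \<zeta> where "\<zeta> = snd h"
  define w where "w = wsol \<xi> \<zeta>"
  have ms: "msol (gB \<xi>) \<zeta> w" unfolding w_def by (rule wsol)
  then have a: "adm w" unfolding msol_def by auto
  have fw: "good (\<lambda>s. KC (w s))" by (rule good_blin[OF adm_good[OF a]])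
  have Ww: "W h t = C (w t)" for t unfolding W_def w_def \<xi>_def \<zeta>_def ..
  define I1 where "I1 = (LINT s:{0..T}|lborel. norm (W h s))"
  have I1_nonneg: "I1 \<ge> 0"
    unfolding I1_def set_lebesgue_integral_def by (intro integral_nonneg_AE) (auto simp: indicator_def)
  have rho0: "rho \<ge> 0" unfolding rho_def by simp
  define cb where "cb = norm C * bB * norm \<xi> + norm C * rho * I1"
  have cb0: "cb \<ge> 0" unfolding cb_def using bB_nonneg rho0 I1_nonneg by simp
  have pt: "norm (C (S t \<zeta>)) \<le> norm (W h t) + cb" if t: "t \<in> {0..T}" for t
  proof -
    have eq: "w t = S t \<zeta> + (conv (gB \<xi>) t - conv (\<lambda>s. KC (w s)) t)"
      using ms t conv_diff[OF good_gB fw, of t] unfolding msol_def by auto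
    have "C (S t \<zeta>) = W h t - C (conv (gB \<xi>) t) + C (conv (\<lambda>s. KC (w s)) t)"
      unfolding Ww eq by (simp add: blinfun.add_right blinfun.diff_right)
    then have "norm (C (S t \<zeta>)) \<le> norm (W h t - C (conv (gB \<xi>) t)) + norm (C (conv (\<lambda>s. KC (w s)) t))"
      by (simp add: norm_triangle_ineq)
    then have "norm (C (S t \<zeta>)) \<le> norm (W h t) + norm (C (conv (gB \<xi>) t)) + norm (C (conv (\<lambda>s. KC (w s)) t))"
      using norm_triangle_ineq4[of "W h t" "C (conv (gB \<xi>) t)"] by linarith
    also have "\<dots> \<le> norm (W h t) + norm C * (bB * norm \<xi>) + norm C * (rho * I1)"
    proof (intro add_mono order_refl)
      have "norm (conv (gB \<xi>) t) \<le> (LINT s:{0..t}|lborel. norm (gB \<xi> s))" using t by (intro conv_norm good_gB) auto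
      also have "\<dots> \<le> (LINT s:{0..T}|lborel. norm (gB \<xi> s))"
        using t good_gB unfolding good_def by (intro set_int_mono_sub) auto
      also have "\<dots> \<le> bB * norm \<xi>" by (rule gB_int)
      finally have "norm (conv (gB \<xi>) t) \<le> bB * norm \<xi>" .
      then show "norm (C (conv (gB \<xi>) t)) \<le> norm C * (bB * norm \<xi>)"
        using norm_blinfun[of C "conv (gB \<xi>) t"] by (meson mult_left_mono norm_ge_zero order_trans)
      have "norm (conv (\<lambda>s. KC (w s)) t) \<le> (LINT s:{0..t}|lborel. norm (KC (w s)))" using t by (intro conv_norm fw) auto
      also have "\<dots> \<le> (LINT s:{0..T}|lborel. norm (KC (w s)))"
        using t fw unfolding good_def by (intro set_int_mono_sub) auto
      also have "\<dots> \<le> (LINT s:{0..T}|lborel. rho * norm (W h s))"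
      proof (rule set_integral_mono)
        show "set_integrable lborel {0..T} (\<lambda>s. norm (KC (w s)))" using fw unfolding good_def by auto
        show "set_integrable lborel {0..T} (\<lambda>s. rho * norm (W h s))" using intW1 by (rule set_integrable_mult_right)
        fix s
        have "norm (KC (w s)) = \<bar>kappa\<bar> * norm (badj C (C (w s)))" by (simp add: blinfun.scaleR_left)
        also have "\<dots> \<le> \<bar>kappa\<bar> * (norm (badj C) * norm (C (w s)))"
          by (intro mult_left_mono norm_blinfun) auto
        finally show "norm (KC (w s)) \<le> rho * norm (W h s)" unfolding rho_def Ww by (simp add: mult.assoc)
      qed
      also have "\<dots> = rho * I1" unfolding I1_def by simp
      finally have "norm (conv (\<lambda>s. KC (w s)) t) \<le> rho * I1" .
      then show "norm (C (conv (\<lambda>s. KC (w s)) t)) \<le> norm C * (rho * I1)"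
        using norm_blinfun[of C "conv (\<lambda>s. KC (w s)) t"] by (meson mult_left_mono norm_ge_zero order_trans)
    qed
    finally show ?thesis unfolding cb_def by (simp add: algebra_simps)
  qed
  have pt2: "(norm (C (S t \<zeta>)))\<^sup>2 \<le> 2 * (norm (W h t))\<^sup>2 + 2 * cb\<^sup>2" if t: "t \<in> {0..T}" for t
  proof -
    have "(norm (C (S t \<zeta>)))\<^sup>2 \<le> (norm (W h t) + cb)\<^sup>2" using pt[OF t] by (intro power_mono) auto
    also have "\<dots> \<le> 2 * (norm (W h t))\<^sup>2 + 2 * cb\<^sup>2" by (rule sq_add2)
    finally show ?thesis .
  qed
  have cS: "continuous_on {0..T} (\<lambda>t. S t \<zeta>)" by (rule continuous_on_subset[OF Scont']) auto
  have "gamma0\<^sup>2 * (norm \<zeta>)\<^sup>2 \<le> (LINT t:{0..T}|lborel. (norm (C (S t \<zeta>)))\<^sup>2)" using obs by auto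
  also have "\<dots> \<le> (LINT t:{0..T}|lborel. 2 * (norm (W h t))\<^sup>2 + 2 * cb\<^sup>2)"
  proof (rule set_integral_mono[OF _ _ pt2])
    show "set_integrable lborel {0..T} (\<lambda>t. (norm (C (S t \<zeta>)))\<^sup>2)"
      by (rule borel_integrable_atLeastAtMost') (intro continuous_intros cS)
    show "set_integrable lborel {0..T} (\<lambda>t. 2 * (norm (W h t))\<^sup>2 + 2 * cb\<^sup>2)"
      using intW2 const_int by (intro set_integral_add(1) set_integrable_mult_right) auto
  qed
  also have "\<dots> = 2 * I2 h + 2 * T * cb\<^sup>2"
  proof -
    have "(LINT t:{0..T}|lborel. 2 * (norm (W h t))\<^sup>2 + 2 * cb\<^sup>2)
      = (LINT t:{0..T}|lborel. 2 * (norm (W h t))\<^sup>2) + (LINT t:{0..T}|lborel. 2 * cb\<^sup>2)"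
      using intW2 const_int by (intro set_integral_add(2) set_integrable_mult_right) auto
    moreover have "(LINT t:{0..T}|lborel. 2 * cb\<^sup>2) = 2 * T * cb\<^sup>2"
      by (subst set_integral_const) (use T_pos' in auto)
    ultimately show ?thesis unfolding I2_def by simp
  qed
  finally have A: "gamma0\<^sup>2 * (norm \<zeta>)\<^sup>2 \<le> 2 * I2 h + 2 * T * cb\<^sup>2" .
  have I1sq: "I1\<^sup>2 \<le> T * I2 h"
    unfolding I1_def I2_def by (rule cs_int[OF T_pos' intW1 intW2])
  have "cb\<^sup>2 \<le> 2 * (norm C * bB * norm \<xi>)\<^sup>2 + 2 * (norm C * rho * I1)\<^sup>2" unfolding cb_def by (rule sq_add2)
  also have "\<dots> = 2 * (norm C)\<^sup>2 * bB\<^sup>2 * (norm \<xi>)\<^sup>2 + 2 * (norm C)\<^sup>2 * rho\<^sup>2 * I1\<^sup>2"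
    by (simp add: power_mult_distrib)
  also have "\<dots> \<le> 2 * (norm C)\<^sup>2 * bB\<^sup>2 * (norm \<xi>)\<^sup>2 + 2 * (norm C)\<^sup>2 * rho\<^sup>2 * (T * I2 h)"
    using I1sq by (intro add_left_mono mult_left_mono) auto
  finally have cbb: "cb\<^sup>2 \<le> 2 * (norm C)\<^sup>2 * bB\<^sup>2 * (norm \<xi>)\<^sup>2 + 2 * (norm C)\<^sup>2 * rho\<^sup>2 * (T * I2 h)" .
  have "2 * T * cb\<^sup>2 \<le> 2 * T * (2 * (norm C)\<^sup>2 * bB\<^sup>2 * (norm \<xi>)\<^sup>2 + 2 * (norm C)\<^sup>2 * rho\<^sup>2 * (T * I2 h))"
    using cbb T_pos' by (intro mult_left_mono) auto
  with A show ?thesis unfolding \<xi>_def \<zeta>_def by (simp add: power2_eq_square algebra_simps)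
qed

lemma QQ_lower: "\<exists>cq>0. \<forall>h. QQ h \<ge> cq * (norm h)\<^sup>2"
proof -
  define A where "A = 2 + 4 * T\<^sup>2 * (norm C)\<^sup>2 * rho\<^sup>2"
  define Bc where "Bc = 4 * T * (norm C)\<^sup>2 * bB\<^sup>2"
  define D where "D = A + Bc / delta + 1"
  define m where "m = min (gamma0\<^sup>2) delta"
  have A0: "A > 0" unfolding A_def by (simp add: add_pos_nonneg)
  have Bc0: "Bc \<ge> 0" unfolding Bc_def using T_pos' by simp
  have D0: "D > 0" unfolding D_def using A0 Bc0 delta by (simp add: add_pos_nonneg)
  have m0: "m > 0" unfolding m_def using gamma0 delta by simp
  have "QQ h \<ge> (m / D) * (norm h)\<^sup>2" for h
  proof -
    define \<xi> where "\<xi> = fst h"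
    define \<zeta> where "\<zeta> = snd h"
    have ob: "gamma0\<^sup>2 * (norm \<zeta>)\<^sup>2 \<le> A * I2 h + Bc * (norm \<xi>)\<^sup>2"
      using obs_step[of h] unfolding A_def Bc_def \<xi>_def \<zeta>_def .
    have Ux: "inner \<xi> (U0 \<xi>) \<ge> delta * (norm \<xi>)\<^sup>2" using U0_coercive by auto
    have Q1: "QQ h \<ge> I2 h" unfolding QQ_def \<xi>_def[symmetric] using U0_nonneg[of \<xi>] by simp
    have Q2: "QQ h \<ge> delta * (norm \<xi>)\<^sup>2" unfolding QQ_def \<xi>_def[symmetric] using Ux I2_nonneg[of h] by simp
    have "D * QQ h = A * QQ h + (Bc / delta + 1) * QQ h" unfolding D_def by (simp add: algebra_simps)
    also have "\<dots> \<ge> A * I2 h + (Bc / delta + 1) * (delta * (norm \<xi>)\<^sup>2)"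
      using Q1 Q2 A0 Bc0 delta by (intro add_mono mult_left_mono) auto
    finally have "D * QQ h \<ge> A * I2 h + (Bc / delta + 1) * (delta * (norm \<xi>)\<^sup>2)" .
    moreover have "(Bc / delta + 1) * (delta * (norm \<xi>)\<^sup>2) = Bc * (norm \<xi>)\<^sup>2 + delta * (norm \<xi>)\<^sup>2"
      using delta by (simp add: field_simps)
    ultimately have "D * QQ h \<ge> gamma0\<^sup>2 * (norm \<zeta>)\<^sup>2 + delta * (norm \<xi>)\<^sup>2" using ob by linarith
    moreover have "gamma0\<^sup>2 * (norm \<zeta>)\<^sup>2 + delta * (norm \<xi>)\<^sup>2 \<ge> m * (norm \<zeta>)\<^sup>2 + m * (norm \<xi>)\<^sup>2"
      unfolding m_def by (intro add_mono mult_right_mono) auto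
    moreover have "(norm h)\<^sup>2 = (norm \<xi>)\<^sup>2 + (norm \<zeta>)\<^sup>2" unfolding \<xi>_def \<zeta>_def by (rule norm_prod_sq)
    ultimately have "D * QQ h \<ge> m * (norm h)\<^sup>2" by (simp add: algebra_simps)
    then show ?thesis using D0 by (simp add: field_simps)
  qed
  then show ?thesis using m0 D0 by (intro exI[of _ "m / D"]) auto
qed

end



lemma eps_ineq:
  fixes a b :: "'a::real_normed_vector" and e :: real
  assumes e: "e > 0"
  shows "(norm a)\<^sup>2 \<le> (1 + e) * (norm b)\<^sup>2 + (1 + 1 / e) * (norm (a - b))\<^sup>2"
proof -
  define x where "x = norm b"
  define z where "z = norm (a - b)"
  have "norm a \<le> x + z" unfolding x_def z_def using norm_triangle_ineq[of b "a - b"] by simp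
  then have "(norm a)\<^sup>2 \<le> (x + z)\<^sup>2" by (intro power_mono) auto
  moreover have "(x + z)\<^sup>2 \<le> (1 + e) * x\<^sup>2 + (1 + 1 / e) * z\<^sup>2"
  proof -
    have "0 \<le> (e * x - z)\<^sup>2 / e" using e by simp
    also have "(e * x - z)\<^sup>2 / e = e * x\<^sup>2 - 2 * x * z + z\<^sup>2 / e"
      using e by (simp add: power2_eq_square field_simps)
    finally have "2 * x * z \<le> e * x\<^sup>2 + z\<^sup>2 / e" by simp
    then show ?thesis by (simp add: power2_eq_square algebra_simps)
  qed
  ultimately show ?thesis unfolding x_def z_def by linarith
qed

context prob2 begin

lemma strict: "strict_convex_on UNIV JJ"
proof -
  obtain cq where cq: "cq > 0" "\<And>h. QQ h \<ge> cq * (norm h)\<^sup>2" using QQ_lower by blast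
  show ?thesis unfolding strict_convex_on_def
  proof (intro conjI ballI impI allI)
    fix p q :: "'th \<times> 'x" and u :: real assume pq: "p \<noteq> q" and u: "0 < u \<and> u < 1"
    have "QQ (p - q) \<ge> cq * (norm (p - q))\<^sup>2" by (rule cq(2))
    moreover have "cq * (norm (p - q))\<^sup>2 > 0" using cq(1) pq by simp
    ultimately have "QQ (p - q) > 0" by linarith
    then have "u * (1 - u) * QQ (p - q) > 0" using u by simp
    then show "JJ ((1 - u) *\<^sub>R p + u *\<^sub>R q) < (1 - u) * JJ p + u * JJ q" unfolding JJ_quad by linarith
  qed simp
qed

lemma minimizer: "\<exists>!p. \<forall>q. JJ p \<le> JJ q"
proof -
  obtain cq where cq: "cq > 0" "\<And>h. QQ h \<ge> cq * (norm h)\<^sup>2" using QQ_lower by blast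
  define m where "m = Inf (range JJ)"
  have bdd: "bdd_below (range JJ)" using JJ_nonneg by (intro bdd_belowI[of _ 0]) auto
  have mle: "m \<le> JJ p" for p unfolding m_def using bdd by (intro cInf_lower) auto
  have "\<exists>p. JJ p < m + 1 / (Suc n)" for n :: nat
  proof -
    have "Inf (range JJ) < m + 1 / (Suc n)" unfolding m_def by simp
    then show ?thesis using cInf_less_iff[OF _ bdd] by auto
  qed
  then obtain ps where ps: "\<And>n. JJ (ps n) < m + 1 / (Suc n)" by metis
  have mid: "QQ (p - q) \<le> 2 * (JJ p + JJ q) - 4 * m" for p q
  proof -
    have "m \<le> JJ ((1 - 1/2) *\<^sub>R p + (1/2) *\<^sub>R q)" by (rule mle)
    then show ?thesis unfolding JJ_quad by simp
  qed
  have dist_b: "cq * (norm (ps n - ps k))\<^sup>2 \<le> 2 * (1 / Suc n + 1 / Suc k)" for n k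
  proof -
    define a where "a = 1 / real (Suc n)"
    define b where "b = 1 / real (Suc k)"
    have "JJ (ps n) < m + a" "JJ (ps k) < m + b" using ps[of n] ps[of k] unfolding a_def b_def by auto
    then show ?thesis using cq(2)[of "ps n - ps k"] mid[of "ps n" "ps k"] unfolding a_def[symmetric] b_def[symmetric] by (smt (verit))
  qed
  have "Cauchy ps"
  proof (rule metric_CauchyI)
    fix e :: real assume e: "e > 0"
    obtain N :: nat where N: "4 / (cq * e\<^sup>2) < N" using reals_Archimedean2 by blast
    have ce: "cq * e\<^sup>2 > 0" using cq e by simp
    have N4: "4 / Suc N < cq * e\<^sup>2"
    proof -
      have "4 / (cq * e\<^sup>2) < Suc N" using N by simp
      then show ?thesis using ce by (simp add: field_simps)
    qed
    show "\<exists>M. \<forall>a\<ge>M. \<forall>b\<ge>M. dist (ps a) (ps b) < e"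
    proof (intro exI allI impI)
      fix a b assume a: "a \<ge> N" and b: "b \<ge> N"
      have "1 / real (Suc a) \<le> 1 / Suc N" using a by (intro divide_left_mono) auto
      moreover have "1 / real (Suc b) \<le> 1 / Suc N" using b by (intro divide_left_mono) auto
      ultimately have "cq * (norm (ps a - ps b))\<^sup>2 \<le> 4 / Suc N" using dist_b[of a b] by simp
      then have "cq * (norm (ps a - ps b))\<^sup>2 < cq * e\<^sup>2" using N4 by linarith
      then have "(norm (ps a - ps b))\<^sup>2 < e\<^sup>2" using cq(1) by simp
      then have "norm (ps a - ps b) < e" using e by (simp add: power_less_imp_less_base)
      then show "dist (ps a) (ps b) < e" by (simp add: dist_norm)
    qed
  qed
  then obtain p where lim: "ps \<longlonglongrightarrow> p" using Cauchy_convergent convergent_def by blast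
  have Jp_le: "JJ p \<le> m + (1 / Suc k) * \<bar>m - Uf (fst p)\<bar>" for k :: nat
  proof -
    define e :: real where "e = 1 / Suc k"
    have e: "e > 0" unfolding e_def by simp
    have bnd: "JJ p \<le> Uf (fst p) + (1 + e) * (m + 1 / Suc n - Uf (fst (ps n))) + (1 + 1 / e) * (MM * (norm (ps n - p))\<^sup>2)" for n
    proof -
      have "II p \<le> (LINT t:{0..T}|lborel. (1 + e) * (norm (rr t - W (ps n) t))\<^sup>2 + (1 + 1 / e) * (norm (W (ps n - p) t))\<^sup>2)"
        unfolding II_def
      proof (rule set_integral_mono)
        show "set_integrable lborel {0..T} (\<lambda>t. (norm (rr t - W p t))\<^sup>2)" by (rule intI)
        show "set_integrable lborel {0..T} (\<lambda>t. (1 + e) * (norm (rr t - W (ps n) t))\<^sup>2 + (1 + 1 / e) * (norm (W (ps n - p) t))\<^sup>2)"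
          using intI intW2 by (intro set_integral_add(1) set_integrable_mult_right) auto
        fix t
        have "(rr t - W p t) - (rr t - W (ps n) t) = W (ps n - p) t" unfolding W_diff by simp
        then show "(norm (rr t - W p t))\<^sup>2 \<le> (1 + e) * (norm (rr t - W (ps n) t))\<^sup>2 + (1 + 1 / e) * (norm (W (ps n - p) t))\<^sup>2"
          using eps_ineq[OF e, of "rr t - W p t" "rr t - W (ps n) t"] by simp
      qed
      also have "\<dots> = (1 + e) * II (ps n) + (1 + 1 / e) * I2 (ps n - p)"
        unfolding II_def I2_def using intI intW2
        by (subst set_integral_add(2)) (auto intro: set_integrable_mult_right)
      also have "\<dots> \<le> (1 + e) * (m + 1 / Suc n - Uf (fst (ps n))) + (1 + 1 / e) * (MM * (norm (ps n - p))\<^sup>2)"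
      proof (intro add_mono mult_left_mono)
        show "II (ps n) \<le> m + 1 / Suc n - Uf (fst (ps n))" using ps[of n] JJ_eq[of "ps n"] by simp
        show "I2 (ps n - p) \<le> MM * (norm (ps n - p))\<^sup>2" by (rule I2_upper)
      qed (use e in auto)
      finally show ?thesis unfolding JJ_eq by simp
    qed
    have Ucont: "(\<lambda>n. Uf (fst (ps n))) \<longlonglongrightarrow> Uf (fst p)"
      unfolding Uf_def by (intro tendsto_intros lim)
    have "(\<lambda>n. Uf (fst p) + (1 + e) * (m + 1 / Suc n - Uf (fst (ps n))) + (1 + 1 / e) * (MM * (norm (ps n - p))\<^sup>2))
        \<longlonglongrightarrow> Uf (fst p) + (1 + e) * (m + 0 - Uf (fst p)) + (1 + 1 / e) * (MM * (norm (p - p))\<^sup>2)"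
      by (intro tendsto_intros Ucont lim lim_1_over_n[THEN LIMSEQ_Suc] LIMSEQ_Suc) 
    then have "JJ p \<le> Uf (fst p) + (1 + e) * (m + 0 - Uf (fst p)) + (1 + 1 / e) * (MM * (norm (p - p))\<^sup>2)"
      using bnd by (intro LIMSEQ_le_const) auto
    then have "JJ p \<le> m + e * (m - Uf (fst p))" by (simp add: algebra_simps)
    also have "\<dots> \<le> m + e * \<bar>m - Uf (fst p)\<bar>" using e by (intro add_left_mono mult_left_mono) auto
    finally show ?thesis unfolding e_def .
  qed
  have "(\<lambda>k. m + (1 / Suc k) * \<bar>m - Uf (fst p)\<bar>) \<longlonglongrightarrow> m + 0 * \<bar>m - Uf (fst p)\<bar>"
    by (intro tendsto_intros lim_1_over_n[THEN LIMSEQ_Suc])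
  then have "JJ p \<le> m + 0 * \<bar>m - Uf (fst p)\<bar>" using Jp_le by (intro LIMSEQ_le_const) auto
  then have pmin: "\<forall>q. JJ p \<le> JJ q" using mle by (simp add: order_trans)
  show ?thesis
  proof (rule ex1I[of _ p])
    show "\<forall>q. JJ p \<le> JJ q" by (rule pmin)
    fix p' assume p': "\<forall>q. JJ p' \<le> JJ q"
    show "p' = p"
    proof (rule ccontr)
      assume ne: "p' \<noteq> p"
      have H: "\<And>x y u. x \<noteq> y \<Longrightarrow> 0 < u \<Longrightarrow> u < 1 \<Longrightarrow> JJ ((1 - u) *\<^sub>R x + u *\<^sub>R y) < (1 - u) * JJ x + u * JJ y"
        using strict unfolding strict_convex_on_def by blast
      have "JJ ((1 - 1/2) *\<^sub>R p' + (1/2) *\<^sub>R p) < (1 - 1/2) * JJ p' + (1/2) * JJ p"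
        by (rule H[OF ne]) auto
      moreover have "(1 - 1/2) * JJ p' + (1/2) * JJ p \<le> JJ p'" using pmin[rule_format, of p'] by simp
      ultimately have "JJ ((1 - 1/2) *\<^sub>R p' + (1/2) *\<^sub>R p) < JJ p'" by (rule less_le_trans)
      then show False using p'[rule_format, of "(1 - 1/2) *\<^sub>R p' + (1/2) *\<^sub>R p"] by simp
    qed
  qed
qed

end

theorem mainTheorem2:
  fixes A :: "'x::{real_inner, polish_space} \<Rightarrow> 'x" and D :: "'x set"
    and S :: "real \<Rightarrow> ('x \<Rightarrow>\<^sub>L 'x)"
    and C :: "'x \<Rightarrow>\<^sub>L 'y::{real_inner, polish_space}"
    and B :: "real \<Rightarrow> ('th::{real_inner, polish_space} \<Rightarrow>\<^sub>L 'x)"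
    and y :: "real \<Rightarrow> 'y" and theta0 :: 'th and kappa T delta gamma0 :: real
    and U0 :: "'th \<Rightarrow>\<^sub>L 'th"
  assumes T: "T > 0"
    and semigroup: "contraction_semigroup S" and gen: "is_generator A D S"
    and B_meas: "set_borel_measurable lborel {0..T} B"
    and B_L2: "set_integrable lborel {0..T} (\<lambda>t. (norm (B t))\<^sup>2)"
    and y_meas: "set_borel_measurable lborel {0..T} y"
    and y_L2: "set_integrable lborel {0..T} (\<lambda>t. (norm (y t))\<^sup>2)"
    and kappa: "kappa \<ge> 0"
    and U0_sa: "\<forall>a b. inner (U0 a) b = inner a (U0 b)"
    and delta: "delta > 0" and U0_coercive: "\<forall>a. inner a (U0 a) \<ge> delta * (norm a)\<^sup>2"
    and gamma0: "gamma0 > 0"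
    and obs: "\<forall>x. (\<integral>t\<in>{0..T}. (norm (C (S t x)))\<^sup>2 \<partial>lborel) \<ge> gamma0\<^sup>2 * (norm x)\<^sup>2"
  shows "strict_convex_on UNIV (\<lambda>p. costJ S B C kappa y T U0 theta0 (fst p) (snd p))
       \<and> (\<exists>!p. \<forall>q. costJ S B C kappa y T U0 theta0 (fst p) (snd p)
                     \<le> costJ S B C kappa y T U0 theta0 (fst q) (snd q))"
proof -
  have sc: "\<And>x. continuous_on {0..} (\<lambda>t. S t x)" and sn: "\<And>t. 0 \<le> t \<Longrightarrow> norm (S t) \<le> 1"
    using semigroup unfolding contraction_semigroup_def by auto
  interpret prob2 S T C B y kappa U0 theta0 delta gamma0
    by unfold_locales (use T sc sn B_meas B_L2 y_meas y_L2 delta U0_coercive gamma0 obs in auto)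
  have e: "(\<lambda>p. costJ S B C kappa y T U0 theta0 (fst p) (snd p)) = JJ" by (simp add: JJ_def fun_eq_iff)
  have e2: "\<And>q. costJ S B C kappa y T U0 theta0 (fst q) (snd q) = JJ q" by (simp add: JJ_def)
  show ?thesis
  proof
    show "strict_convex_on UNIV (\<lambda>p. costJ S B C kappa y T U0 theta0 (fst p) (snd p))"
      unfolding e by (rule strict)
    show "\<exists>!p. \<forall>q. costJ S B C kappa y T U0 theta0 (fst p) (snd p) \<le> costJ S B C kappa y T U0 theta0 (fst q) (snd q)"
      unfolding e2 by (rule minimizer)
  qed
qed

end
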